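(* Let $V$ be a finite set of sites and let $\mathcal{A}$ be a finite collection of nonempty subsets of $V$. For $S=(S_i)_{i\in V}\in\{-1,1\}^V$ and $A\in\mathcal{A}$ put $S_A=\prod_{i\in A}S_i$. Let $(J_A)_{A\in\mathcal{A}}$ be independent standard Gaussian random variables, and for $x=(x_A)_{A\in\mathcal{A}}\in[0,\infty)^{\mathcal{A}}$ define $$P(x)=\mathbb{E}\left[\log \sum_{S\in\{-1,1\}^V}\exp\Big(\sum_{A\in\mathcal{A}}\big(\sqrt{x_A}\,J_A+x_A\big)S_A\Big)\right],$$ where $\mathbb{E}$ denotes expectation over $(J_A)$. Then $P$ is a convex function of $x$ on $[0,\infty)^{\mathcal{A}}$.
   Context: Equivalently, $P(x)=\mathbb{E}[\log Z]$ for the Ising spin-glass model $Z=\sum_{S}\exp(\sum_{A}\beta_A J'_A S_A)$ on the Nishimori line, where $J'_A$ are independent Gaussians with mean $J_{A0}$ and variance $\sigma_A^2>0$, and the Nishimori condition $\beta_A=J_{A0}/\sigma_A^2$ holds; the parametrization is $\beta_A=\sqrt{x_A}/\sigma_A$, $J_{A0}=\sigma_A\sqrt{x_A}$. *)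

theory Defs
  imports "HOL-Probability.Probability"
begin

definition std_gauss :: "real measure" where
  "std_gauss = density lborel std_normal_density"

definition spins :: "'v set \<Rightarrow> ('v \<Rightarrow> real) set" where
  "spins V = PiE V (\<lambda>_. {-1, 1})"

definition free_energy :: "'v set \<Rightarrow> 'v set set \<Rightarrow> ('v set \<Rightarrow> real) \<Rightarrow> real" where
  "free_energy V \<A> x =
     (\<integral>J. ln (\<Sum>S\<in>spins V. exp (\<Sum>A\<in>\<A>. (sqrt (x A) * J A + x A) * (\<Prod>i\<in>A. S i)))
       \<partial>(PiM \<A> (\<lambda>_. std_gauss)))"

definition nonneg_dom :: "'v set set \<Rightarrow> ('v set \<Rightarrow> real) set" where
  "nonneg_dom \<A> = {x \<in> extensional \<A>. \<forall>A\<in>\<A>. 0 \<le> x A}"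

end

theory Submission
  imports Defs
begin

lemma deriv_integral:
  fixes F F' :: "real \<Rightarrow> 'a \<Rightarrow> real" and B :: "'a \<Rightarrow> real"
  assumes ab: "a < t" "t < b"
    and int: "\<And>s. a < s \<Longrightarrow> s < b \<Longrightarrow> integrable M (F s)"
    and meas: "F' t \<in> borel_measurable M"
    and der: "\<And>x s. x \<in> space M \<Longrightarrow> a < s \<Longrightarrow> s < b \<Longrightarrow> ((\<lambda>r. F r x) has_real_derivative F' s x) (at s)"
    and B: "integrable M B"
    and bnd: "\<And>x s. x \<in> space M \<Longrightarrow> a < s \<Longrightarrow> s < b \<Longrightarrow> \<bar>F' s x\<bar> \<le> B x"
  shows "((\<lambda>s. \<integral>x. F s x \<partial>M) has_real_derivative (\<integral>x. F' t x \<partial>M)) (at t)"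
proof -
  have t: "t \<in> {a<..<b}" using ab by auto
  have "at t within {a<..<b} = at t" by (rule at_within_open[OF t]) auto
  moreover have "((\<lambda>s. \<integral>x. F s x \<partial>M) has_real_derivative (\<integral>x. F' t x \<partial>M)) (at t within {a<..<b})"
    unfolding has_field_derivative_iff tendsto_at_iff_sequentially
  proof (intro allI impI)
    fix X :: "nat \<Rightarrow> real"
    assume X: "\<forall>i. X i \<in> {a<..<b} - {t}" and lim: "X \<longlonglongrightarrow> t"
    have eq: "(\<integral>x. F (X i) x \<partial>M) - (\<integral>x. F t x \<partial>M) = (\<integral>x. F (X i) x - F t x \<partial>M)" for i
    proof -
      have i1: "integrable M (F (X i))" using X int by auto
      have i2: "integrable M (F t)" using int ab by auto
      show ?thesis by (rule Bochner_Integration.integral_diff[OF i1 i2, symmetric])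
    qed
    have L: "(\<lambda>i. \<integral>x. (F (X i) x - F t x) / (X i - t) \<partial>M) \<longlonglongrightarrow> (\<integral>x. F' t x \<partial>M)"
    proof (rule integral_dominated_convergence[where w=B])
      show "F' t \<in> borel_measurable M" by fact
      show "(\<lambda>x. (F (X i) x - F t x) / (X i - t)) \<in> borel_measurable M" for i
        using X int ab by (intro borel_measurable_divide borel_measurable_diff borel_measurable_integrable) auto
      show "integrable M B" by fact
      show "AE x in M. (\<lambda>i. (F (X i) x - F t x) / (X i - t)) \<longlonglongrightarrow> F' t x"
      proof (rule AE_I2)
        fix x assume x: "x \<in> space M"
        have "((\<lambda>r. F r x) has_real_derivative F' t x) (at t within {a<..<b})"
          using der[OF x ab] by (rule has_field_derivative_at_within)
        then have "((\<lambda>y. (F y x - F t x) / (y - t)) \<longlongrightarrow> F' t x) (at t within {a<..<b})"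
          unfolding has_field_derivative_iff .
        then have "((\<lambda>y. (F y x - F t x) / (y - t)) \<circ> X) \<longlonglongrightarrow> F' t x"
          unfolding tendsto_at_iff_sequentially using X lim by blast
        then show "(\<lambda>i. (F (X i) x - F t x) / (X i - t)) \<longlonglongrightarrow> F' t x" by (simp add: comp_def)
      qed
      show "AE x in M. norm ((F (X i) x - F t x) / (X i - t)) \<le> B x" for i
      proof (rule AE_I2)
        fix x assume x: "x \<in> space M"
        have "norm (F (X i) x - F t x) \<le> B x * norm (X i - t)"
        proof (rule field_differentiable_bound[where S="{a<..<b}" and f'="\<lambda>s. F' s x"])
          show "convex {a<..<b}" by simp
          show "((\<lambda>r. F r x) has_field_derivative F' z x) (at z within {a<..<b})" if "z \<in> {a<..<b}" for z
            using der[OF x] that by (auto intro: has_field_derivative_at_within)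
          show "norm (F' z x) \<le> B x" if "z \<in> {a<..<b}" for z using bnd[OF x] that by auto
        qed (use X t in auto)
        moreover have "X i - t \<noteq> 0" using X by auto
        ultimately show "norm ((F (X i) x - F t x) / (X i - t)) \<le> B x"
          by (simp add: divide_le_eq norm_divide)
      qed
    qed
    have eq2: "(\<integral>x. (F (X i) x - F t x) / (X i - t) \<partial>M) = ((\<integral>x. F (X i) x \<partial>M) - (\<integral>x. F t x \<partial>M)) / (X i - t)" for i
      by (simp only: eq integral_divide_zero)
    show "((\<lambda>y. ((\<integral>x. F y x \<partial>M) - (\<integral>x. F t x \<partial>M)) / (y - t)) \<circ> X) \<longlonglongrightarrow> (\<integral>x. F' t x \<partial>M)"
      using L unfolding comp_def eq2 .
  qed
  ultimately show ?thesis by simp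
qed

lemma cont_integral:
  fixes F :: "real \<Rightarrow> 'a \<Rightarrow> real" and B :: "'a \<Rightarrow> real"
  assumes meas: "\<And>s. s \<in> S \<Longrightarrow> F s \<in> borel_measurable M"
    and cont: "\<And>x. x \<in> space M \<Longrightarrow> continuous_on S (\<lambda>s. F s x)"
    and B: "integrable M B"
    and bnd: "\<And>x s. x \<in> space M \<Longrightarrow> s \<in> S \<Longrightarrow> \<bar>F s x\<bar> \<le> B x"
  shows "continuous_on S (\<lambda>s. \<integral>x. F s x \<partial>M)"
proof (rule continuous_on_sequentiallyI)
  fix u :: "nat \<Rightarrow> real" and a assume u: "\<forall>n. u n \<in> S" and a: "a \<in> S" and lim: "u \<longlonglongrightarrow> a"
  show "(\<lambda>n. \<integral>x. F (u n) x \<partial>M) \<longlonglongrightarrow> (\<integral>x. F a x \<partial>M)"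
  proof (rule integral_dominated_convergence[where w=B])
    show "F a \<in> borel_measurable M" using meas a by auto
    show "F (u i) \<in> borel_measurable M" for i using meas u by auto
    show "integrable M B" by fact
    show "AE x in M. (\<lambda>i. F (u i) x) \<longlonglongrightarrow> F a x"
    proof (rule AE_I2)
      fix x assume x: "x \<in> space M"
      show "(\<lambda>i. F (u i) x) \<longlonglongrightarrow> F a x"
        by (rule continuous_on_tendsto_compose[OF cont[OF x] lim a]) (use u in auto)
    qed
    show "AE x in M. norm (F (u i) x) \<le> B x" for i
      using bnd u by (intro AE_I2) auto
  qed
qed

lemma space_sg[simp]: "space std_gauss = UNIV"
  by (simp add: std_gauss_def)

lemma sets_sg[simp]: "sets std_gauss = sets borel"
  by (simp add: std_gauss_def)

lemma measurable_sg1[simp]: "measurable std_gauss N = measurable borel N"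
  by (rule measurable_cong_sets[OF sets_sg refl])

lemma measurable_sg2[simp]: "measurable N std_gauss = measurable N borel"
  by (rule measurable_cong_sets[OF refl sets_sg])

lemma sg_prob: "prob_space std_gauss"
  unfolding std_gauss_def by (rule prob_space_normal_density) simp

lemma sg_shift:
  "distr std_gauss std_gauss (\<lambda>g. g + a) = density std_gauss (\<lambda>g. ennreal (exp (a * g - a\<^sup>2 / 2)))"
proof -
  let ?phi = "\<lambda>x. ennreal (std_normal_density x)"
  have 1: "distr std_gauss std_gauss (\<lambda>g. g + a) = distr (density lborel ?phi) borel ((+) a)"
    by (rule distr_cong) (auto simp: std_gauss_def)
  have "density (distr lborel borel ((+) a)) (\<lambda>g. ?phi (g - a)) = distr (density lborel (\<lambda>x. ?phi (a + x - a))) borel ((+) a)"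
    by (rule density_distr) auto
  then have 2: "distr (density lborel ?phi) borel ((+) a) = density lborel (\<lambda>g. ?phi (g - a))"
    by (simp add: lborel_distr_plus)
  have 3: "density std_gauss (\<lambda>g. ennreal (exp (a * g - a\<^sup>2 / 2))) = density lborel (\<lambda>g. ?phi g * ennreal (exp (a * g - a\<^sup>2 / 2)))"
    unfolding std_gauss_def by (rule density_density_eq) auto
  have 4: "?phi g * ennreal (exp (a * g - a\<^sup>2 / 2)) = ?phi (g - a)" for g
  proof -
    have "std_normal_density g * exp (a * g - a\<^sup>2 / 2) = std_normal_density (g - a)"
      unfolding std_normal_density_def
      by (simp add: mult.assoc exp_add[symmetric] power2_eq_square field_simps)
    then show ?thesis by (simp add: ennreal_mult'[symmetric])
  qed
  show ?thesis unfolding 1 2 3 4 ..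
qed

lemma sg_neg: "distr std_gauss std_gauss uminus = std_gauss"
proof -
  let ?phi = "\<lambda>x. ennreal (std_normal_density x)"
  have 1: "distr std_gauss std_gauss uminus = distr (density lborel ?phi) borel uminus"
    by (rule distr_cong) (auto simp: std_gauss_def)
  have "density (distr lborel borel uminus) ?phi = distr (density lborel (\<lambda>x. ?phi (- x))) borel uminus"
    by (rule density_distr) auto
  then show ?thesis unfolding 1 by (simp add: lborel_distr_uminus std_normal_density_def std_gauss_def)
qed

lemma sg_exp_nn: "(\<integral>\<^sup>+g. ennreal (exp (a * g - a\<^sup>2 / 2)) \<partial>std_gauss) = 1"
proof -
  interpret prob_space std_gauss by (rule sg_prob)
  have "(\<integral>\<^sup>+g. ennreal (exp (a * g - a\<^sup>2 / 2)) \<partial>std_gauss) = emeasure (density std_gauss (\<lambda>g. ennreal (exp (a * g - a\<^sup>2 / 2)))) UNIV"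
    by (simp add: emeasure_density)
  also have "\<dots> = emeasure (distr std_gauss std_gauss (\<lambda>g. g + a)) UNIV"
    by (simp add: sg_shift)
  also have "\<dots> = 1"
    by (subst emeasure_distr) (auto simp: emeasure_space_1[simplified])
  finally show ?thesis .
qed

lemma sg_exp_int: "integrable std_gauss (\<lambda>g. exp (a * g - a\<^sup>2 / 2))"
  by (rule integrableI_nonneg) (auto simp: sg_exp_nn)

lemma sg_exp_int': "integrable std_gauss (\<lambda>g. exp (a * g))"
proof -
  have "integrable std_gauss (\<lambda>g. exp (a\<^sup>2 / 2) * exp (a * g - a\<^sup>2 / 2))"
    using sg_exp_int by simp
  moreover have "exp (a\<^sup>2 / 2) * exp (a * g - a\<^sup>2 / 2) = exp (a * g)" for g
    by (simp add: exp_add[symmetric])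
  ultimately show ?thesis by simp
qed

lemma sg_expabs_int: "integrable std_gauss (\<lambda>g. exp (c * \<bar>g\<bar>))"
proof (rule Bochner_Integration.integrable_bound[OF Bochner_Integration.integrable_add[OF sg_exp_int'[of c] sg_exp_int'[of "-c"]]])
  show "(\<lambda>g. exp (c * \<bar>g\<bar>)) \<in> borel_measurable std_gauss" by simp
  show "AE x in std_gauss. norm (exp (c * \<bar>x\<bar>)) \<le> norm (exp (c * x) + exp (- c * x))"
  proof (intro AE_I2)
    fix x :: real
    have p: "0 < exp (c * x)" "0 < exp (- c * x)" by auto
    have "exp (c * \<bar>x\<bar>) \<le> exp (c * x) + exp (- c * x)"
      using p by (cases "x \<ge> 0") auto
    then show "norm (exp (c * \<bar>x\<bar>)) \<le> norm (exp (c * x) + exp (- c * x))"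
      using p by simp
  qed
qed


lemma sg_product_prob: "product_prob_space (\<lambda>_. std_gauss)"
  by (rule product_prob_spaceI) (rule sg_prob)

lemma distr_PiM_sg:
  fixes T :: "'i \<Rightarrow> real \<Rightarrow> real"
  assumes I: "finite I" and T[measurable]: "\<And>i. T i \<in> borel_measurable borel"
  shows "distr (PiM I (\<lambda>_. std_gauss)) (PiM I (\<lambda>_. std_gauss)) (\<lambda>x. \<lambda>i\<in>I. T i (x i))
       = PiM I (\<lambda>i. distr std_gauss std_gauss (T i))"
proof -
  let ?N = "\<lambda>i. distr std_gauss std_gauss (T i)"
  interpret sg: prob_space std_gauss by (rule sg_prob)
  interpret N: product_prob_space ?N
    by (rule product_prob_spaceI) (auto intro!: sg.prob_space_distr)
  interpret S: product_prob_space "\<lambda>_. std_gauss" by (rule sg_product_prob)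
  have mT: "(\<lambda>x. \<lambda>i\<in>I. T i (x i)) \<in> measurable (PiM I (\<lambda>_. std_gauss)) (PiM I (\<lambda>_. std_gauss))"
  proof (intro measurable_restrict)
    fix i assume "i \<in> I"
    have "T i \<in> measurable std_gauss std_gauss" by simp
    then show "(\<lambda>x. T i (x i)) \<in> measurable (PiM I (\<lambda>_. std_gauss)) std_gauss"
      by (rule measurable_compose[OF measurable_component_singleton[OF \<open>i \<in> I\<close>]])
  qed
  show ?thesis
  proof (rule N.PiM_eqI[OF I])
    show "sets (distr (PiM I (\<lambda>_. std_gauss)) (PiM I (\<lambda>_. std_gauss)) (\<lambda>x. \<lambda>i\<in>I. T i (x i))) = sets (PiM I ?N)"
      unfolding sets_distr by (rule sets_PiM_cong) simp_all
    fix A assume A: "\<And>i. i \<in> I \<Longrightarrow> A i \<in> sets (?N i)"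
    have A': "A i \<in> sets borel" if "i \<in> I" for i using A[OF that] by simp
    have pre: "(\<lambda>x. \<lambda>i\<in>I. T i (x i)) -` PiE I A \<inter> space (PiM I (\<lambda>_. std_gauss)) = PiE I (\<lambda>i. T i -` A i)"
      by (auto simp: space_PiM PiE_iff)
    have "emeasure (distr (PiM I (\<lambda>_. std_gauss)) (PiM I (\<lambda>_. std_gauss)) (\<lambda>x. \<lambda>i\<in>I. T i (x i))) (PiE I A)
        = emeasure (PiM I (\<lambda>_. std_gauss)) (PiE I (\<lambda>i. T i -` A i))"
      using A' by (subst emeasure_distr[OF mT]) (auto simp: pre intro!: sets_PiM_I_finite I)
    also have "\<dots> = (\<Prod>i\<in>I. emeasure std_gauss (T i -` A i))"
    proof (rule S.emeasure_PiM[OF I])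
      fix i assume "i \<in> I"
      then have "T i -` A i \<inter> space borel \<in> sets borel" using A' measurable_sets[OF T] by blast
      then show "T i -` A i \<in> sets std_gauss" by simp
    qed
    also have "\<dots> = (\<Prod>i\<in>I. emeasure (?N i) (A i))"
      using A' by (intro prod.cong refl) (simp add: emeasure_distr)
    finally show "emeasure (distr (PiM I (\<lambda>_. std_gauss)) (PiM I (\<lambda>_. std_gauss)) (\<lambda>x. \<lambda>i\<in>I. T i (x i))) (PiE I A)
        = (\<Prod>i\<in>I. emeasure (?N i) (A i))" .
  qed
qed

lemma PiM_density_sg:
  fixes w :: "'i \<Rightarrow> real \<Rightarrow> ennreal"
  assumes I: "finite I" and w[measurable]: "\<And>i. w i \<in> borel_measurable borel"
    and wp: "\<And>i. prob_space (density std_gauss (w i))"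
  shows "PiM I (\<lambda>i. density std_gauss (w i)) = density (PiM I (\<lambda>_. std_gauss)) (\<lambda>x. \<Prod>i\<in>I. w i (x i))"
proof -
  let ?N = "\<lambda>i. density std_gauss (w i)"
  interpret N: product_prob_space ?N
    by (rule product_prob_spaceI) (rule wp)
  interpret S: product_prob_space "\<lambda>_. std_gauss" by (rule sg_product_prob)
  show ?thesis
  proof (rule N.PiM_eqI[OF I, symmetric])
    show "sets (density (PiM I (\<lambda>_. std_gauss)) (\<lambda>x. \<Prod>i\<in>I. w i (x i))) = sets (PiM I ?N)"
      unfolding sets_density by (rule sets_PiM_cong) simp_all
    fix A assume A: "\<And>i. i \<in> I \<Longrightarrow> A i \<in> sets (?N i)"
    have A': "A i \<in> sets borel" if "i \<in> I" for i using A[OF that] by simp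
    have mw: "(\<lambda>x. \<Prod>i\<in>I. w i (x i)) \<in> borel_measurable (PiM I (\<lambda>_. std_gauss))"
    proof (intro borel_measurable_prod_ennreal)
      fix i assume "i \<in> I"
      have "w i \<in> borel_measurable std_gauss" by simp
      then show "(\<lambda>x. w i (x i)) \<in> borel_measurable (PiM I (\<lambda>_. std_gauss))"
        by (rule measurable_compose[OF measurable_component_singleton[OF \<open>i \<in> I\<close>]])
    qed
    have PA: "PiE I A \<in> sets (PiM I (\<lambda>_. std_gauss))"
      using A' by (intro sets_PiM_I_finite I) simp
    have "emeasure (density (PiM I (\<lambda>_. std_gauss)) (\<lambda>x. \<Prod>i\<in>I. w i (x i))) (PiE I A)
       = (\<integral>\<^sup>+x. (\<Prod>i\<in>I. w i (x i)) * indicator (PiE I A) x \<partial>PiM I (\<lambda>_. std_gauss))"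
      by (rule emeasure_density[OF mw PA])
    also have "\<dots> = (\<integral>\<^sup>+x. (\<Prod>i\<in>I. w i (x i) * indicator (A i) (x i)) \<partial>PiM I (\<lambda>_. std_gauss))"
    proof (rule nn_integral_cong)
      fix x assume x: "x \<in> space (PiM I (\<lambda>_. std_gauss))"
      have "indicator (PiE I A) x = (\<Prod>i\<in>I. indicator (A i) (x i) :: ennreal)"
      proof (cases "x \<in> PiE I A")
        case True then show ?thesis by (auto simp: indicator_def PiE_iff)
      next
        case False
        then obtain i where "i \<in> I" "x i \<notin> A i" using x by (auto simp: space_PiM PiE_iff)
        then show ?thesis using False I by (auto simp: indicator_def intro!: prod_zero)
      qed
      then show "(\<Prod>i\<in>I. w i (x i)) * indicator (PiE I A) x = (\<Prod>i\<in>I. w i (x i) * indicator (A i) (x i))"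
        by (simp add: prod.distrib)
    qed
    also have "\<dots> = (\<Prod>i\<in>I. \<integral>\<^sup>+g. w i g * indicator (A i) g \<partial>std_gauss)"
    proof (rule S.product_nn_integral_prod[OF I])
      fix i assume "i \<in> I"
      then show "(\<lambda>g. w i g * indicator (A i) g) \<in> borel_measurable std_gauss"
        using A' by simp
    qed
    also have "\<dots> = (\<Prod>i\<in>I. emeasure (?N i) (A i))"
      using A' by (intro prod.cong refl) (simp add: emeasure_density)
    finally show "emeasure (density (PiM I (\<lambda>_. std_gauss)) (\<lambda>x. \<Prod>i\<in>I. w i (x i))) (PiE I A) = (\<Prod>i\<in>I. emeasure (?N i) (A i))" .
  qed
qed

lemma measurable_shift_sg:
  fixes T :: "'i \<Rightarrow> real \<Rightarrow> real"
  assumes T: "\<And>i. T i \<in> borel_measurable borel"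
  shows "(\<lambda>x. \<lambda>i\<in>I. T i (x i)) \<in> measurable (PiM I (\<lambda>_. std_gauss)) (PiM I (\<lambda>_. std_gauss))"
proof (intro measurable_restrict)
  fix i assume "i \<in> I"
  have "T i \<in> measurable std_gauss std_gauss" using T by simp
  then show "(\<lambda>x. T i (x i)) \<in> measurable (PiM I (\<lambda>_. std_gauss)) std_gauss"
    by (rule measurable_compose[OF measurable_component_singleton[OF \<open>i \<in> I\<close>]])
qed

lemma CM_PiM:
  fixes a :: "'i \<Rightarrow> real" and F :: "('i \<Rightarrow> real) \<Rightarrow> real"
  assumes I: "finite I" and F: "F \<in> borel_measurable (PiM I (\<lambda>_. std_gauss))"
  shows "(\<integral>x. F (\<lambda>i\<in>I. x i + a i) \<partial>PiM I (\<lambda>_. std_gauss))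
       = (\<integral>x. (\<Prod>i\<in>I. exp (a i * x i - (a i)\<^sup>2 / 2)) * F x \<partial>PiM I (\<lambda>_. std_gauss))"
proof -
  let ?M = "PiM I (\<lambda>_. std_gauss)"
  let ?w = "\<lambda>i g. ennreal (exp (a i * g - (a i)\<^sup>2 / 2))"
  have mT: "(\<lambda>x. \<lambda>i\<in>I. x i + a i) \<in> measurable ?M ?M"
    using measurable_shift_sg[of "\<lambda>i g. g + a i" I] by simp
  have "(\<integral>x. F (\<lambda>i\<in>I. x i + a i) \<partial>?M) = (\<integral>x. F x \<partial>distr ?M ?M (\<lambda>x. \<lambda>i\<in>I. x i + a i))"
    by (rule integral_distr[OF mT F, symmetric])
  also have "distr ?M ?M (\<lambda>x. \<lambda>i\<in>I. x i + a i) = PiM I (\<lambda>i. distr std_gauss std_gauss (\<lambda>g. g + a i))"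
    using distr_PiM_sg[OF I, of "\<lambda>i g. g + a i"] by simp
  also have "\<dots> = PiM I (\<lambda>i. density std_gauss (?w i))"
    by (simp add: sg_shift)
  also have "\<dots> = density ?M (\<lambda>x. \<Prod>i\<in>I. ?w i (x i))"
  proof (rule PiM_density_sg[OF I])
    show "?w i \<in> borel_measurable borel" for i by simp
    show "prob_space (density std_gauss (?w i))" for i
    proof -
      interpret prob_space std_gauss by (rule sg_prob)
      show ?thesis unfolding sg_shift[symmetric] by (rule prob_space_distr) simp
    qed
  qed
  also have "(\<lambda>x. \<Prod>i\<in>I. ?w i (x i)) = (\<lambda>x. ennreal (\<Prod>i\<in>I. exp (a i * x i - (a i)\<^sup>2 / 2)))"
    by (simp add: prod_ennreal)
  also have "(\<integral>x. F x \<partial>density ?M (\<lambda>x. ennreal (\<Prod>i\<in>I. exp (a i * x i - (a i)\<^sup>2 / 2))))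
      = (\<integral>x. (\<Prod>i\<in>I. exp (a i * x i - (a i)\<^sup>2 / 2)) *\<^sub>R F x \<partial>?M)"
  proof (rule integral_density[OF F])
    show "(\<lambda>x. \<Prod>i\<in>I. exp (a i * x i - (a i)\<^sup>2 / 2)) \<in> borel_measurable ?M"
    proof (intro borel_measurable_prod)
      fix i assume "i \<in> I"
      have "(\<lambda>g. exp (a i * g - (a i)\<^sup>2 / 2)) \<in> borel_measurable std_gauss" by simp
      then show "(\<lambda>x. exp (a i * x i - (a i)\<^sup>2 / 2)) \<in> borel_measurable ?M"
        by (rule measurable_compose[OF measurable_component_singleton[OF \<open>i \<in> I\<close>]])
    qed
    show "AE x in ?M. 0 \<le> (\<Prod>i\<in>I. exp (a i * x i - (a i)\<^sup>2 / 2))"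
      by (intro AE_I2 prod_nonneg) auto
  qed
  finally show ?thesis unfolding restrict_def by simp
qed

lemma distr_flip_sg:
  fixes s :: "'i \<Rightarrow> real"
  assumes I: "finite I" and s: "\<And>i. i \<in> I \<Longrightarrow> s i = 1 \<or> s i = -1"
  shows "distr (PiM I (\<lambda>_. std_gauss)) (PiM I (\<lambda>_. std_gauss)) (\<lambda>x. \<lambda>i\<in>I. s i * x i) = PiM I (\<lambda>_. std_gauss)"
proof -
  have "distr (PiM I (\<lambda>_. std_gauss)) (PiM I (\<lambda>_. std_gauss)) (\<lambda>x. \<lambda>i\<in>I. s i * x i)
     = PiM I (\<lambda>i. distr std_gauss std_gauss (\<lambda>g. s i * g))"
    using distr_PiM_sg[OF I, of "\<lambda>i g. s i * g"] by simp
  also have "\<dots> = PiM I (\<lambda>_. std_gauss)"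
  proof (rule PiM_cong[OF refl])
    fix i assume "i \<in> I"
    then consider "s i = 1" | "s i = -1" using s by blast
    then show "distr std_gauss std_gauss (\<lambda>g. s i * g) = std_gauss"
    proof cases
      case 1 then show ?thesis by (simp add: distr_id)
    next
      case 2
      have "distr std_gauss std_gauss (\<lambda>g. s i * g) = distr std_gauss std_gauss uminus"
        by (rule distr_cong) (auto simp: 2)
      then show ?thesis by (simp add: sg_neg)
    qed
  qed
  finally show ?thesis .
qed

lemma flip_PiM:
  fixes s :: "'i \<Rightarrow> real" and F :: "('i \<Rightarrow> real) \<Rightarrow> real"
  assumes I: "finite I" and s: "\<And>i. i \<in> I \<Longrightarrow> s i = 1 \<or> s i = -1"
    and F: "F \<in> borel_measurable (PiM I (\<lambda>_. std_gauss))"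
  shows "(\<integral>x. F (\<lambda>i\<in>I. s i * x i) \<partial>PiM I (\<lambda>_. std_gauss)) = (\<integral>x. F x \<partial>PiM I (\<lambda>_. std_gauss))"
    and "integrable (PiM I (\<lambda>_. std_gauss)) (\<lambda>x. F (\<lambda>i\<in>I. s i * x i)) \<longleftrightarrow> integrable (PiM I (\<lambda>_. std_gauss)) F"
proof -
  let ?M = "PiM I (\<lambda>_. std_gauss)"
  have mT: "(\<lambda>x. \<lambda>i\<in>I. s i * x i) \<in> measurable ?M ?M"
    using measurable_shift_sg[of "\<lambda>i g. s i * g" I] by simp
  show "(\<integral>x. F (\<lambda>i\<in>I. s i * x i) \<partial>?M) = (\<integral>x. F x \<partial>?M)"
    using integral_distr[OF mT F] distr_flip_sg[OF I s] by simp
  show "integrable ?M (\<lambda>x. F (\<lambda>i\<in>I. s i * x i)) \<longleftrightarrow> integrable ?M F"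
    using integrable_distr_eq[OF mT F] distr_flip_sg[OF I s] by simp
qed

lemma int_component:
  fixes f :: "real \<Rightarrow> real"
  assumes I: "finite I" and i: "i \<in> I" and f: "integrable std_gauss f"
  shows "integrable (PiM I (\<lambda>_. std_gauss)) (\<lambda>x. f (x i))"
proof -
  have fm: "f \<in> borel_measurable std_gauss" using borel_measurable_integrable[OF f] .
  have d: "distr (PiM I (\<lambda>_. std_gauss)) std_gauss (\<lambda>x. x i) = std_gauss"
    by (rule distr_PiM_component[OF sg_prob i])
  have e: "integrable (distr (PiM I (\<lambda>_. std_gauss)) std_gauss (\<lambda>x. x i)) f = integrable (PiM I (\<lambda>_. std_gauss)) (\<lambda>x. f (x i))"
    by (rule integrable_distr_eq[OF measurable_component_singleton[OF i] fm])
  show ?thesis using e f unfolding d by simp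
qed

lemma ibp_PiM:
  fixes K K' :: "('i \<Rightarrow> real) \<Rightarrow> real"
  assumes I: "finite I" and b: "b \<in> I"
    and Km: "K \<in> borel_measurable (PiM I (\<lambda>_. std_gauss))"
    and K'm: "K' \<in> borel_measurable (PiM I (\<lambda>_. std_gauss))"
    and Kb: "\<And>x. x \<in> space (PiM I (\<lambda>_. std_gauss)) \<Longrightarrow> \<bar>K x\<bar> \<le> C"
    and K'b: "\<And>x. x \<in> space (PiM I (\<lambda>_. std_gauss)) \<Longrightarrow> \<bar>K' x\<bar> \<le> C'"
    and der: "\<And>x r. x \<in> space (PiM I (\<lambda>_. std_gauss)) \<Longrightarrow>
                 ((\<lambda>r. K (x(b := r))) has_real_derivative K' (x(b := r))) (at r)"
  shows "(\<integral>x. x b * K x \<partial>PiM I (\<lambda>_. std_gauss)) = (\<integral>x. K' x \<partial>PiM I (\<lambda>_. std_gauss))"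
proof -
  let ?M = "PiM I (\<lambda>_. std_gauss)"
  interpret P: prob_space ?M by (intro prob_space_PiM sg_prob)
  define sh where "sh \<alpha> x = (\<lambda>i\<in>I. x i + (if i = b then \<alpha> else 0))" for \<alpha> :: real and x :: "'i \<Rightarrow> real"
  have sh_eq: "sh \<alpha> x = x(b := x b + \<alpha>)" if "x \<in> space ?M" for \<alpha> x
    using that b by (auto simp: sh_def space_PiM PiE_def extensional_def fun_eq_iff)
  have sh_sp: "sh \<alpha> x \<in> space ?M" for \<alpha> x
    by (auto simp: sh_def space_PiM)
  have sh_m: "sh \<alpha> \<in> measurable ?M ?M" for \<alpha>
    unfolding sh_def using measurable_shift_sg[of "\<lambda>i g. g + (if i = b then \<alpha> else 0)" I] by simp
  have prodeq: "(\<Prod>i\<in>I. exp ((if i = b then \<alpha> else 0) * x i - (if i = b then \<alpha> else 0)\<^sup>2 / 2))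
      = exp (\<alpha> * x b - \<alpha>\<^sup>2 / 2)" for \<alpha> :: real and x :: "'i \<Rightarrow> real"
  proof -
    have "(\<Prod>i\<in>I. exp ((if i = b then \<alpha> else 0) * x i - (if i = b then \<alpha> else 0)\<^sup>2 / 2))
       = (\<Prod>i\<in>I. (if i = b then exp (\<alpha> * x b - \<alpha>\<^sup>2 / 2) else 1))"
      by (rule prod.cong) auto
    also have "\<dots> = exp (\<alpha> * x b - \<alpha>\<^sup>2 / 2)" using b I by (simp add: prod.delta)
    finally show ?thesis .
  qed
  have PhiPsi: "(\<integral>x. K (sh \<alpha> x) \<partial>?M) = (\<integral>x. exp (\<alpha> * x b - \<alpha>\<^sup>2 / 2) * K x \<partial>?M)" for \<alpha>
    using CM_PiM[OF I Km, of "\<lambda>i. if i = b then \<alpha> else 0"] unfolding prodeq sh_def by simp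
  have xb_m: "(\<lambda>x. x b) \<in> borel_measurable ?M"
    using measurable_component_singleton[OF b, of "\<lambda>_. std_gauss"] by simp
  have int_exp: "integrable ?M (\<lambda>x. exp (c * \<bar>x b\<bar>))" for c
    using int_component[OF I b sg_expabs_int[of c]] .
  have D1: "((\<lambda>\<alpha>. \<integral>x. K (sh \<alpha> x) \<partial>?M) has_real_derivative (\<integral>x. K' (sh 0 x) \<partial>?M)) (at 0)"
  proof (rule deriv_integral[where a="-1" and b=1 and B="\<lambda>_. C'" and F="\<lambda>s x. K (sh s x)" and F'="\<lambda>s x. K' (sh s x)" and t=0])
    show "integrable ?M (\<lambda>x. K (sh s x))" for s
      by (rule P.integrable_const_bound[where B=C]) (use Kb sh_sp measurable_compose[OF sh_m Km] in auto)
    show "(\<lambda>x. K' (sh 0 x)) \<in> borel_measurable ?M" using measurable_compose[OF sh_m K'm] .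
    show "((\<lambda>r. K (sh r x)) has_real_derivative K' (sh s x)) (at s)" if x: "x \<in> space ?M" for x s
    proof -
      have "((\<lambda>r. K (x(b := r))) has_real_derivative K' (x(b := x b + s))) (at (s + x b))"
        using der[OF x, of "x b + s"] by (simp add: add.commute)
      then have "((\<lambda>r. K (x(b := r + x b))) has_real_derivative K' (x(b := x b + s))) (at s)"
        by (simp add: DERIV_shift)
      then show ?thesis using sh_eq[OF x] by (simp add: add.commute)
    qed
    show "\<bar>K' (sh s x)\<bar> \<le> C'" if "x \<in> space ?M" for x s using K'b sh_sp by auto
  qed simp_all
  have D2: "((\<lambda>\<alpha>. \<integral>x. exp (\<alpha> * x b - \<alpha>\<^sup>2 / 2) * K x \<partial>?M) has_real_derivative
      (\<integral>x. (x b - 0) * exp (0 * x b - 0\<^sup>2 / 2) * K x \<partial>?M)) (at 0)"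
  proof (rule deriv_integral[where a="-1" and b=1 and B="\<lambda>x. 2 * \<bar>C\<bar> * exp (2 * \<bar>x b\<bar>)" and F="\<lambda>s x. exp (s * x b - s\<^sup>2 / 2) * K x" and F'="\<lambda>s x. (x b - s) * exp (s * x b - s\<^sup>2 / 2) * K x" and t=0])
    show "integrable ?M (\<lambda>x. exp (s * x b - s\<^sup>2 / 2) * K x)" if "-1 < s" "s < 1" for s
    proof (rule Bochner_Integration.integrable_bound[OF integrable_mult_right[OF int_exp[of 1], of "\<bar>C\<bar>"]])
      show "(\<lambda>x. exp (s * x b - s\<^sup>2 / 2) * K x) \<in> borel_measurable ?M"
        using xb_m Km by measurable
      show "AE x in ?M. norm (exp (s * x b - s\<^sup>2 / 2) * K x) \<le> norm (\<bar>C\<bar> * exp (1 * \<bar>x b\<bar>))"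
      proof (rule AE_I2)
        fix x assume x: "x \<in> space ?M"
        have "s * x b - s\<^sup>2 / 2 \<le> \<bar>x b\<bar>"
        proof -
          have "s * x b \<le> \<bar>s\<bar> * \<bar>x b\<bar>" by (metis abs_ge_self abs_mult)
          also have "\<dots> \<le> \<bar>x b\<bar>" using that by (intro mult_left_le_one_le) auto
          finally show ?thesis using zero_le_power2[of s] by linarith
        qed
        then have "exp (s * x b - s\<^sup>2 / 2) \<le> exp \<bar>x b\<bar>" by simp
        then show "norm (exp (s * x b - s\<^sup>2 / 2) * K x) \<le> norm (\<bar>C\<bar> * exp (1 * \<bar>x b\<bar>))"
          using Kb[OF x] by (simp add: abs_mult mult_mono' mult.commute)
      qed
    qed
    show "(\<lambda>x. (x b - 0) * exp (0 * x b - 0\<^sup>2 / 2) * K x) \<in> borel_measurable ?M"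
      using xb_m Km by measurable
    show "((\<lambda>r. exp (r * x b - r\<^sup>2 / 2) * K x) has_real_derivative (x b - s) * exp (s * x b - s\<^sup>2 / 2) * K x) (at s)" for x s
      by (auto intro!: derivative_eq_intros simp: power2_eq_square algebra_simps)
    show "integrable ?M (\<lambda>x. 2 * \<bar>C\<bar> * exp (2 * \<bar>x b\<bar>))"
      using int_exp[of 2] by simp
    show "\<bar>(x b - s) * exp (s * x b - s\<^sup>2 / 2) * K x\<bar> \<le> 2 * \<bar>C\<bar> * exp (2 * \<bar>x b\<bar>)"
      if x: "x \<in> space ?M" and s: "-1 < s" "s < 1" for x s
    proof -
      have e1: "exp (s * x b - s\<^sup>2 / 2) \<le> exp \<bar>x b\<bar>"
      proof -
        have "s * x b \<le> \<bar>s\<bar> * \<bar>x b\<bar>" by (metis abs_ge_self abs_mult)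
        also have "\<dots> \<le> \<bar>x b\<bar>" using s by (intro mult_left_le_one_le) auto
        finally have "s * x b - s\<^sup>2 / 2 \<le> \<bar>x b\<bar>" using zero_le_power2[of s] by linarith
        then show ?thesis by simp
      qed
      have e2: "\<bar>x b - s\<bar> \<le> 2 * exp \<bar>x b\<bar>"
      proof -
        have "\<bar>x b - s\<bar> \<le> \<bar>x b\<bar> + 1" using s by auto
        also have "\<dots> \<le> exp \<bar>x b\<bar> + 1" using exp_ge_add_one_self[of "\<bar>x b\<bar>"] by linarith
        also have "\<dots> \<le> 2 * exp \<bar>x b\<bar>" using one_le_exp_iff[of "\<bar>x b\<bar>"] by simp
        finally show ?thesis .
      qed
      have "\<bar>(x b - s) * exp (s * x b - s\<^sup>2 / 2) * K x\<bar> = \<bar>x b - s\<bar> * exp (s * x b - s\<^sup>2 / 2) * \<bar>K x\<bar>"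
        by (simp add: abs_mult)
      also have "\<dots> \<le> (2 * exp \<bar>x b\<bar>) * exp \<bar>x b\<bar> * \<bar>C\<bar>"
        using e1 e2 Kb[OF x] by (intro mult_mono) auto
      also have "\<dots> = 2 * \<bar>C\<bar> * exp (2 * \<bar>x b\<bar>)"
        by (simp add: exp_add[symmetric] mult_ac)
      finally show ?thesis .
    qed
  qed simp_all
  have eqf: "(\<lambda>\<alpha>. \<integral>x. K (sh \<alpha> x) \<partial>?M) = (\<lambda>\<alpha>. \<integral>x. exp (\<alpha> * x b - \<alpha>\<^sup>2 / 2) * K x \<partial>?M)"
    by (rule ext) (rule PhiPsi)
  have D1': "((\<lambda>\<alpha>. \<integral>x. exp (\<alpha> * x b - \<alpha>\<^sup>2 / 2) * K x \<partial>?M) has_real_derivative (\<integral>x. K' (sh 0 x) \<partial>?M)) (at 0)"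
    using D1 unfolding eqf .
  have e1: "(\<integral>x. K' (sh 0 x) \<partial>?M) = (\<integral>x. (x b - 0) * exp (0 * x b - 0\<^sup>2 / 2) * K x \<partial>?M)"
    by (rule DERIV_unique[OF D1' D2])
  have e2: "(\<integral>x. K' (sh 0 x) \<partial>?M) = (\<integral>x. K' x \<partial>?M)"
    by (rule Bochner_Integration.integral_cong) (auto simp: sh_eq)
  have e3: "(\<lambda>x. (x b - 0) * exp (0 * x b - 0\<^sup>2 / 2) * K x) = (\<lambda>x. x b * K x)"
    by (rule ext) simp
  show ?thesis using e1 e2 unfolding e3 by simp
qed

lemma CM_measure:
  fixes a :: "'i \<Rightarrow> real"
  assumes I: "finite I"
  shows "distr (PiM I (\<lambda>_. std_gauss)) (PiM I (\<lambda>_. std_gauss)) (\<lambda>x. \<lambda>i\<in>I. x i + a i)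
       = density (PiM I (\<lambda>_. std_gauss)) (\<lambda>x. ennreal (\<Prod>i\<in>I. exp (a i * x i - (a i)\<^sup>2 / 2)))"
proof -
  let ?M = "PiM I (\<lambda>_. std_gauss)"
  let ?w = "\<lambda>i g. ennreal (exp (a i * g - (a i)\<^sup>2 / 2))"
  have "distr ?M ?M (\<lambda>x. \<lambda>i\<in>I. x i + a i) = PiM I (\<lambda>i. distr std_gauss std_gauss (\<lambda>g. g + a i))"
    using distr_PiM_sg[OF I, of "\<lambda>i g. g + a i"] by simp
  also have "\<dots> = PiM I (\<lambda>i. density std_gauss (?w i))"
    by (simp add: sg_shift)
  also have "\<dots> = density ?M (\<lambda>x. \<Prod>i\<in>I. ?w i (x i))"
  proof (rule PiM_density_sg[OF I])
    show "?w i \<in> borel_measurable borel" for i by simp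
    show "prob_space (density std_gauss (?w i))" for i
    proof -
      interpret prob_space std_gauss by (rule sg_prob)
      show ?thesis unfolding sg_shift[symmetric] by (rule prob_space_distr) simp
    qed
  qed
  also have "(\<lambda>x. \<Prod>i\<in>I. ?w i (x i)) = (\<lambda>x. ennreal (\<Prod>i\<in>I. exp (a i * x i - (a i)\<^sup>2 / 2)))"
    by (simp add: prod_ennreal)
  finally show ?thesis .
qed

lemma CM_integrable:
  fixes a :: "'i \<Rightarrow> real" and G :: "('i \<Rightarrow> real) \<Rightarrow> real"
  assumes I: "finite I" and G: "G \<in> borel_measurable (PiM I (\<lambda>_. std_gauss))"
    and Gb: "\<And>x. x \<in> space (PiM I (\<lambda>_. std_gauss)) \<Longrightarrow> \<bar>G x\<bar> \<le> C"
  shows "integrable (PiM I (\<lambda>_. std_gauss)) (\<lambda>x. (\<Prod>i\<in>I. exp (a i * x i - (a i)\<^sup>2 / 2)) * G x)"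
proof -
  let ?M = "PiM I (\<lambda>_. std_gauss)"
  let ?W = "\<lambda>x. \<Prod>i\<in>I. exp (a i * x i - (a i)\<^sup>2 / 2)"
  interpret P: prob_space ?M by (intro prob_space_PiM sg_prob)
  have mT: "(\<lambda>x. \<lambda>i\<in>I. x i + a i) \<in> measurable ?M ?M"
    using measurable_shift_sg[of "\<lambda>i g. g + a i" I] by simp
  interpret D: prob_space "density ?M (\<lambda>x. ennreal (?W x))"
    unfolding CM_measure[OF I, symmetric] by (rule P.prob_space_distr[OF mT])
  have Wm: "?W \<in> borel_measurable ?M"
  proof (intro borel_measurable_prod)
    fix i assume "i \<in> I"
    have "(\<lambda>g. exp (a i * g - (a i)\<^sup>2 / 2)) \<in> borel_measurable std_gauss" by simp
    then show "(\<lambda>x. exp (a i * x i - (a i)\<^sup>2 / 2)) \<in> borel_measurable ?M"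
      by (rule measurable_compose[OF measurable_component_singleton[OF \<open>i \<in> I\<close>]])
  qed
  have "integrable (density ?M (\<lambda>x. ennreal (?W x))) G"
  proof (rule D.integrable_const_bound[where B=C])
    show "AE x in density ?M (\<lambda>x. ennreal (?W x)). norm (G x) \<le> C"
      using Gb by (intro AE_I2) simp
    show "G \<in> borel_measurable (density ?M (\<lambda>x. ennreal (?W x)))"
      using G by simp
  qed
  then have "integrable ?M (\<lambda>x. ?W x *\<^sub>R G x)"
    by (subst integrable_density[symmetric]) (use G Wm in \<open>auto intro!: prod_nonneg\<close>)
  then show ?thesis by simp
qed

lemma sg_abs_int: "integrable std_gauss (\<lambda>g. \<bar>g\<bar>)"
proof (rule Bochner_Integration.integrable_bound[OF sg_expabs_int[of 1]])
  show "(\<lambda>g. \<bar>g\<bar>) \<in> borel_measurable std_gauss" by simp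
  show "AE x in std_gauss. norm \<bar>x\<bar> \<le> norm (exp (1 * \<bar>x\<bar>))"
  proof (intro AE_I2)
    fix x :: real
    have "\<bar>x\<bar> \<le> exp \<bar>x\<bar>" using exp_ge_add_one_self[of "\<bar>x\<bar>"] by linarith
    then show "norm \<bar>x\<bar> \<le> norm (exp (1 * \<bar>x\<bar>))" by simp
  qed
qed

lemma int_lin_abs:
  assumes I: "finite I" and i: "i \<in> I"
  shows "integrable (PiM I (\<lambda>_. std_gauss)) (\<lambda>x. c * \<bar>x i\<bar> + c')"
proof -
  interpret P: prob_space "PiM I (\<lambda>_. std_gauss)" by (intro prob_space_PiM sg_prob)
  have "integrable std_gauss (\<lambda>g. c * \<bar>g\<bar> + c')"
  proof (rule Bochner_Integration.integrable_add)
    show "integrable std_gauss (\<lambda>g. c * \<bar>g\<bar>)" using sg_abs_int by simp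
    interpret prob_space std_gauss by (rule sg_prob)
    show "integrable std_gauss (\<lambda>g. c')" by simp
  qed
  then show ?thesis using int_component[OF I i] by blast
qed

definition SA :: "('v \<Rightarrow> real) \<Rightarrow> 'v set \<Rightarrow> real" where
  "SA S A = (\<Prod>i\<in>A. S i)"

locale spin =
  fixes V :: "'v set" and AA :: "'v set set"
  assumes finV: "finite V" and finAA: "finite AA" and AAV: "\<And>A. A \<in> AA \<Longrightarrow> A \<subseteq> V"
begin

definition "Hm k S = (\<Sum>A\<in>AA. k A * SA S A)"
definition "Nf f k = (\<Sum>S\<in>spins V. f S * exp (Hm k S))"
definition "Zf k = Nf (\<lambda>_. 1) k"
definition "avg f k = Nf f k / Zf k"
definition "mm k A = avg (\<lambda>S. SA S A) k"
definition "qq k A B = avg (\<lambda>S. SA S A * SA S B) k"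
definition "cc k A B = qq k A B - mm k A * mm k B"

lemma spins_fin: "finite (spins V)"
  unfolding spins_def using finV by (intro finite_PiE) auto

lemma one_spin: "(\<lambda>i\<in>V. 1) \<in> spins V"
  unfolding spins_def by auto

lemma spins_ne: "spins V \<noteq> {}"
  using one_spin by auto

lemma spin_val: "S \<in> spins V \<Longrightarrow> i \<in> V \<Longrightarrow> S i = 1 \<or> S i = -1"
  unfolding spins_def by (auto simp: PiE_iff)

lemma SA_sq: assumes "S \<in> spins V" "A \<subseteq> V" shows "SA S A * SA S A = 1"
proof -
  have "SA S A * SA S A = (\<Prod>i\<in>A. S i * S i)" unfolding SA_def by (simp add: prod.distrib)
  also have "\<dots> = (\<Prod>i\<in>A. 1)" using assms spin_val by (intro prod.cong) fastforce+
  finally show ?thesis by simp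
qed

lemma SA_abs: assumes "S \<in> spins V" "A \<subseteq> V" shows "\<bar>SA S A\<bar> = 1"
proof -
  have "\<bar>SA S A\<bar> = (\<Prod>i\<in>A. \<bar>S i\<bar>)" unfolding SA_def by (simp add: abs_prod)
  also have "\<dots> = (\<Prod>i\<in>A. 1)" using assms spin_val by (intro prod.cong) fastforce+
  finally show ?thesis by simp
qed

lemma SA_pm: assumes "S \<in> spins V" "A \<subseteq> V" shows "SA S A = 1 \<or> SA S A = -1"
  using SA_abs[OF assms] by linarith

lemma Zf_pos: "Zf k > 0"
  unfolding Zf_def Nf_def using spins_fin spins_ne by (intro sum_pos) auto

lemma Zf_ne: "Zf k \<noteq> 0" using Zf_pos[of k] by simp

lemma Nf_cong: "(\<And>S. S \<in> spins V \<Longrightarrow> f S = g S) \<Longrightarrow> Nf f k = Nf g k"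
  unfolding Nf_def by (intro sum.cong) auto

lemma avg_cong: "(\<And>S. S \<in> spins V \<Longrightarrow> f S = g S) \<Longrightarrow> avg f k = avg g k"
  unfolding avg_def by (simp cong: Nf_cong)

lemma Nf_add: "Nf (\<lambda>S. f S + g S) k = Nf f k + Nf g k"
  unfolding Nf_def by (simp add: distrib_right sum.distrib)

lemma Nf_diff: "Nf (\<lambda>S. f S - g S) k = Nf f k - Nf g k"
  unfolding Nf_def by (simp add: left_diff_distrib sum_subtractf)

lemma Nf_cmult: "Nf (\<lambda>S. a * f S) k = a * Nf f k"
  unfolding Nf_def by (simp add: sum_distrib_left mult.assoc)

lemma Nf_sum: "Nf (\<lambda>S. \<Sum>B\<in>X. g B S) k = (\<Sum>B\<in>X. Nf (g B) k)"
  unfolding Nf_def by (simp add: sum_distrib_right sum.swap[of _ X])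

lemma avg_add: "avg (\<lambda>S. f S + g S) k = avg f k + avg g k"
  unfolding avg_def Nf_add by (simp add: add_divide_distrib)

lemma avg_diff: "avg (\<lambda>S. f S - g S) k = avg f k - avg g k"
  unfolding avg_def Nf_diff by (simp add: diff_divide_distrib)

lemma avg_cmult: "avg (\<lambda>S. a * f S) k = a * avg f k"
  unfolding avg_def Nf_cmult by simp

lemma avg_sum: "avg (\<lambda>S. \<Sum>B\<in>X. g B S) k = (\<Sum>B\<in>X. avg (g B) k)"
  unfolding avg_def Nf_sum by (simp add: sum_divide_distrib)

lemma avg_one: "avg (\<lambda>_. 1) k = 1"
  unfolding avg_def Zf_def using Zf_ne[of k] by (simp add: Zf_def)

lemma avg_bound:
  assumes "\<And>S. S \<in> spins V \<Longrightarrow> \<bar>f S\<bar> \<le> 1"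
  shows "\<bar>avg f k\<bar> \<le> 1"
proof -
  have "\<bar>Nf f k\<bar> \<le> (\<Sum>S\<in>spins V. \<bar>f S * exp (Hm k S)\<bar>)"
    unfolding Nf_def by (rule sum_abs)
  also have "\<dots> \<le> (\<Sum>S\<in>spins V. 1 * exp (Hm k S))"
    using assms by (intro sum_mono) (simp add: abs_mult)
  also have "\<dots> = Zf k" unfolding Zf_def Nf_def ..
  finally have le: "\<bar>Nf f k\<bar> \<le> Zf k" .
  have "\<bar>avg f k\<bar> = \<bar>Nf f k\<bar> / Zf k" by (simp only: avg_def abs_divide abs_of_pos[OF Zf_pos])
  also have "\<dots> \<le> 1" unfolding pos_divide_le_eq[OF Zf_pos] using le by simp
  finally show ?thesis .
qed

lemma mm_bound: assumes A: "A \<in> AA" shows "\<bar>mm k A\<bar> \<le> 1"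
  unfolding mm_def
proof (rule avg_bound)
  fix S assume "S \<in> spins V"
  then show "\<bar>SA S A\<bar> \<le> 1" using SA_abs[OF _ AAV[OF A]] by simp
qed

lemma qq_bound: assumes A: "A \<in> AA" and B: "B \<in> AA" shows "\<bar>qq k A B\<bar> \<le> 1"
  unfolding qq_def
proof (rule avg_bound)
  fix S assume "S \<in> spins V"
  then show "\<bar>SA S A * SA S B\<bar> \<le> 1" using SA_abs[OF _ AAV[OF A]] SA_abs[OF _ AAV[OF B]] by (simp add: abs_mult)
qed

lemma cc_bound: assumes "A \<in> AA" "B \<in> AA" shows "\<bar>cc k A B\<bar> \<le> 2"
proof -
  have "\<bar>mm k A * mm k B\<bar> \<le> 1" using mm_bound[OF assms(1)] mm_bound[OF assms(2)]
    by (simp add: abs_mult mult_le_one)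
  then show ?thesis unfolding cc_def using qq_bound[OF assms, of k] by linarith
qed

lemma qq_diag: "A \<in> AA \<Longrightarrow> qq k A A = 1"
  unfolding qq_def using SA_sq AAV by (subst avg_cong[where g="\<lambda>_. 1"]) (auto simp: avg_one)

lemma cc_diag: "A \<in> AA \<Longrightarrow> cc k A A = 1 - (mm k A)\<^sup>2"
  unfolding cc_def by (simp add: qq_diag power2_eq_square)

definition "Lf p' S = (\<Sum>A\<in>AA. p' A * SA S A)"

lemma Nf_deriv:
  assumes d: "\<And>A. A \<in> AA \<Longrightarrow> ((\<lambda>t. p t A) has_real_derivative p' A) (at tt)"
  shows "((\<lambda>t. Nf f (p t)) has_real_derivative Nf (\<lambda>S. f S * Lf p' S) (p tt)) (at tt)"
proof -
  have H: "((\<lambda>t. Hm (p t) S) has_real_derivative Lf p' S) (at tt)" for S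
    unfolding Hm_def Lf_def by (intro DERIV_sum DERIV_cmult_right d)
  have "((\<lambda>t. \<Sum>S\<in>spins V. f S * exp (Hm (p t) S)) has_real_derivative
          (\<Sum>S\<in>spins V. f S * (exp (Hm (p tt) S) * Lf p' S))) (at tt)"
    by (intro DERIV_sum DERIV_cmult DERIV_fun_exp H)
  moreover have "(\<Sum>S\<in>spins V. f S * (exp (Hm (p tt) S) * Lf p' S)) = Nf (\<lambda>S. f S * Lf p' S) (p tt)"
    unfolding Nf_def by (intro sum.cong refl) (simp only: mult_ac)
  ultimately show ?thesis unfolding Nf_def by simp
qed

lemma avg_deriv:
  assumes d: "\<And>A. A \<in> AA \<Longrightarrow> ((\<lambda>t. p t A) has_real_derivative p' A) (at tt)"
  shows "((\<lambda>t. avg f (p t)) has_real_derivative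
           avg (\<lambda>S. f S * Lf p' S) (p tt) - avg f (p tt) * avg (Lf p') (p tt)) (at tt)"
proof -
  have Z: "((\<lambda>t. Zf (p t)) has_real_derivative Nf (Lf p') (p tt)) (at tt)"
    using Nf_deriv[where p=p and p'=p' and tt=tt and f="\<lambda>_. 1", OF d] unfolding Zf_def by simp
  have "((\<lambda>t. Nf f (p t) / Zf (p t)) has_real_derivative
     (Nf (\<lambda>S. f S * Lf p' S) (p tt) * Zf (p tt) - Nf f (p tt) * Nf (Lf p') (p tt)) / (Zf (p tt) * Zf (p tt))) (at tt)"
    by (rule DERIV_divide[OF Nf_deriv[where p=p and p'=p' and tt=tt, OF d] Z Zf_ne])
  moreover have "(Nf (\<lambda>S. f S * Lf p' S) (p tt) * Zf (p tt) - Nf f (p tt) * Nf (Lf p') (p tt)) / (Zf (p tt) * Zf (p tt))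
      = avg (\<lambda>S. f S * Lf p' S) (p tt) - avg f (p tt) * avg (Lf p') (p tt)"
    unfolding avg_def using Zf_ne[of "p tt"] by (simp add: field_simps)
  ultimately show ?thesis unfolding avg_def by simp
qed

lemma avg_Lf: "avg (Lf p') k = (\<Sum>A\<in>AA. p' A * mm k A)"
  unfolding Lf_def mm_def avg_sum avg_cmult ..

lemma lnZ_deriv:
  assumes d: "\<And>A. A \<in> AA \<Longrightarrow> ((\<lambda>t. p t A) has_real_derivative p' A) (at tt)"
  shows "((\<lambda>t. ln (Zf (p t))) has_real_derivative (\<Sum>A\<in>AA. p' A * mm (p tt) A)) (at tt)"
proof -
  have Z: "((\<lambda>t. Zf (p t)) has_real_derivative Nf (Lf p') (p tt)) (at tt)"
    using Nf_deriv[where p=p and p'=p' and tt=tt and f="\<lambda>_. 1", OF d] unfolding Zf_def by simp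
  have "((\<lambda>t. ln (Zf (p t))) has_real_derivative 1 / Zf (p tt) * Nf (Lf p') (p tt)) (at tt)"
    by (rule DERIV_chain2[OF DERIV_ln_divide[OF Zf_pos] Z])
  moreover have "1 / Zf (p tt) * Nf (Lf p') (p tt) = avg (Lf p') (p tt)"
    unfolding avg_def by simp
  ultimately show ?thesis unfolding avg_Lf by simp
qed

lemma mm_deriv:
  assumes d: "\<And>A. A \<in> AA \<Longrightarrow> ((\<lambda>t. p t A) has_real_derivative p' A) (at tt)"
  shows "((\<lambda>t. mm (p t) A) has_real_derivative (\<Sum>B\<in>AA. p' B * cc (p tt) A B)) (at tt)"
proof -
  have e1: "avg (\<lambda>S. SA S A * Lf p' S) k = (\<Sum>B\<in>AA. p' B * qq k A B)" for k
  proof -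
    have "avg (\<lambda>S. SA S A * Lf p' S) k = avg (\<lambda>S. \<Sum>B\<in>AA. p' B * (SA S A * SA S B)) k"
      unfolding Lf_def by (simp add: sum_distrib_left mult_ac)
    also have "\<dots> = (\<Sum>B\<in>AA. p' B * qq k A B)"
      unfolding avg_sum avg_cmult qq_def ..
    finally show ?thesis .
  qed
  have "(\<Sum>B\<in>AA. p' B * qq (p tt) A B) - mm (p tt) A * (\<Sum>B\<in>AA. p' B * mm (p tt) B)
      = (\<Sum>B\<in>AA. p' B * cc (p tt) A B)"
    unfolding cc_def by (simp add: sum_distrib_left right_diff_distrib sum_subtractf mult_ac)
  then show ?thesis
    using avg_deriv[where p=p and p'=p' and tt=tt and f="\<lambda>S. SA S A", OF d] unfolding mm_def[symmetric] e1 avg_Lf by simp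
qed

lemma sum_delta_mult: fixes \<alpha> :: real and g :: "'v set \<Rightarrow> real" assumes "B \<in> AA" shows "(\<Sum>C\<in>AA. (if C = B then \<alpha> else 0) * g C) = \<alpha> * g B"
proof -
  have "(\<Sum>C\<in>AA. (if C = B then \<alpha> else 0) * g C) = (\<Sum>C\<in>AA. if C = B then \<alpha> * g B else 0)"
  proof (rule sum.cong[OF refl])
    fix C show "(if C = B then \<alpha> else 0) * g C = (if C = B then \<alpha> * g B else 0)"
      by (cases "C = B") simp_all
  qed
  also have "\<dots> = \<alpha> * g B" using assms finAA by (simp add: sum.delta)
  finally show ?thesis .
qed

lemma cc_deriv_single:
  assumes A: "A \<in> AA" and B: "B \<in> AA"
    and d: "\<And>C. C \<in> AA \<Longrightarrow> ((\<lambda>t. p t C) has_real_derivative (if C = B then \<alpha> else 0)) (at tt)"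
  shows "((\<lambda>t. cc (p t) A B) has_real_derivative \<alpha> * (-2 * cc (p tt) A B * mm (p tt) B)) (at tt)"
proof -
  let ?p' = "\<lambda>C. if C = B then \<alpha> else 0"
  let ?k = "p tt"
  have Lf: "Lf ?p' S = \<alpha> * SA S B" for S
    unfolding Lf_def using sum_delta_mult[OF B, of \<alpha> "\<lambda>C. SA S C"] .
  have q1: "avg (\<lambda>S. SA S A * SA S B * Lf ?p' S) ?k = \<alpha> * mm ?k A"
  proof -
    have "avg (\<lambda>S. SA S A * SA S B * Lf ?p' S) ?k = avg (\<lambda>S. \<alpha> * SA S A) ?k"
      using SA_sq[OF _ AAV[OF B]] unfolding Lf by (intro avg_cong) (simp add: mult_ac)
    then show ?thesis unfolding avg_cmult mm_def .
  qed
  have dq: "((\<lambda>t. qq (p t) A B) has_real_derivative \<alpha> * mm ?k A - qq ?k A B * (\<alpha> * mm ?k B)) (at tt)"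
    using avg_deriv[where p=p and p'="?p'" and tt=tt and f="\<lambda>S. SA S A * SA S B", OF d] unfolding qq_def[symmetric] q1 avg_Lf
    using sum_delta_mult[OF B, of \<alpha> "mm ?k"] by simp
  have dmA: "((\<lambda>t. mm (p t) A) has_real_derivative \<alpha> * cc ?k A B) (at tt)"
    using mm_deriv[where p=p and p'="?p'" and tt=tt and A=A, OF d] sum_delta_mult[OF B, of \<alpha> "cc ?k A"] by simp
  have dmB: "((\<lambda>t. mm (p t) B) has_real_derivative \<alpha> * (1 - (mm ?k B)\<^sup>2)) (at tt)"
    using mm_deriv[where p=p and p'="?p'" and tt=tt and A=B, OF d] sum_delta_mult[OF B, of \<alpha> "cc ?k B"] cc_diag[OF B] by simp
  have "((\<lambda>t. qq (p t) A B - mm (p t) A * mm (p t) B) has_real_derivative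
      (\<alpha> * mm ?k A - qq ?k A B * (\<alpha> * mm ?k B)) - (\<alpha> * cc ?k A B * mm ?k B + \<alpha> * (1 - (mm ?k B)\<^sup>2) * mm ?k A)) (at tt)"
    by (intro DERIV_diff DERIV_mult dq dmA dmB)
  moreover have "(\<alpha> * mm ?k A - qq ?k A B * (\<alpha> * mm ?k B)) - (\<alpha> * cc ?k A B * mm ?k B + \<alpha> * (1 - (mm ?k B)\<^sup>2) * mm ?k A)
      = \<alpha> * (-2 * cc ?k A B * mm ?k B)"
    unfolding cc_def by (simp add: algebra_simps power2_eq_square)
  ultimately show ?thesis unfolding cc_def by simp
qed

definition "mulS \<sigma> S = (\<lambda>i\<in>V. \<sigma> i * S i)"
definition "gk \<sigma> k = (\<lambda>A. SA \<sigma> A * k A)"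

lemma mulS_in: assumes "\<sigma> \<in> spins V" "S \<in> spins V" shows "mulS \<sigma> S \<in> spins V"
proof -
  have "\<sigma> i * S i \<in> {-1, 1}" if "i \<in> V" for i
    using spin_val[OF assms(1) that] spin_val[OF assms(2) that] by auto
  then show ?thesis unfolding mulS_def spins_def by auto
qed

lemma mulS_mulS: assumes "\<sigma> \<in> spins V" "S \<in> spins V" shows "mulS \<sigma> (mulS \<sigma> S) = S"
proof (rule ext)
  fix i show "mulS \<sigma> (mulS \<sigma> S) i = S i"
  proof (cases "i \<in> V")
    case True
    then have "\<sigma> i * (\<sigma> i * S i) = S i" using spin_val[OF assms(1) True] by auto
    then show ?thesis using True unfolding mulS_def by simp
  next
    case False
    then show ?thesis using assms(2) unfolding mulS_def spins_def by (simp add: PiE_def extensional_def)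
  qed
qed

lemma mulS_bij: assumes "\<sigma> \<in> spins V" shows "bij_betw (mulS \<sigma>) (spins V) (spins V)"
  by (rule bij_betw_byWitness[where f'="mulS \<sigma>"]) (auto simp: mulS_mulS[OF assms] mulS_in[OF assms])

lemma SA_mulS: assumes "A \<subseteq> V" shows "SA (mulS \<sigma> S) A = SA \<sigma> A * SA S A"
proof -
  have "SA (mulS \<sigma> S) A = (\<Prod>i\<in>A. \<sigma> i * S i)"
    unfolding SA_def mulS_def using assms by (intro prod.cong) auto
  then show ?thesis unfolding SA_def by (simp add: prod.distrib)
qed

lemma Hm_gk: "Hm (gk \<sigma> k) S = Hm k (mulS \<sigma> S)"
  unfolding Hm_def gk_def using AAV by (intro sum.cong refl) (simp add: SA_mulS mult_ac)

lemma Nf_gk: assumes \<sigma>: "\<sigma> \<in> spins V" shows "Nf f (gk \<sigma> k) = Nf (\<lambda>S. f (mulS \<sigma> S)) k"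
proof -
  let ?g = "\<lambda>T. f (mulS \<sigma> T) * exp (Hm k T)"
  have "Nf f (gk \<sigma> k) = (\<Sum>S\<in>spins V. ?g (mulS \<sigma> S))"
    unfolding Nf_def Hm_gk by (intro sum.cong refl) (simp add: mulS_mulS[OF \<sigma>])
  also have "\<dots> = (\<Sum>T\<in>spins V. ?g T)"
    by (rule sum.reindex_bij_betw[OF mulS_bij[OF \<sigma>]])
  finally show ?thesis unfolding Nf_def .
qed

lemma Zf_gk: "\<sigma> \<in> spins V \<Longrightarrow> Zf (gk \<sigma> k) = Zf k"
  unfolding Zf_def by (simp add: Nf_gk)

lemma avg_gk: "\<sigma> \<in> spins V \<Longrightarrow> avg f (gk \<sigma> k) = avg (\<lambda>S. f (mulS \<sigma> S)) k"
  unfolding avg_def by (simp add: Nf_gk Zf_gk)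

lemma mm_gk: assumes "\<sigma> \<in> spins V" "A \<in> AA" shows "mm (gk \<sigma> k) A = SA \<sigma> A * mm k A"
  unfolding mm_def avg_gk[OF assms(1)] SA_mulS[OF AAV[OF assms(2)]] avg_cmult ..

lemma qq_gk: assumes "\<sigma> \<in> spins V" "A \<in> AA" "B \<in> AA"
  shows "qq (gk \<sigma> k) A B = SA \<sigma> A * SA \<sigma> B * qq k A B"
proof -
  have "qq (gk \<sigma> k) A B = avg (\<lambda>S. (SA \<sigma> A * SA \<sigma> B) * (SA S A * SA S B)) k"
    unfolding qq_def avg_gk[OF assms(1)] SA_mulS[OF AAV[OF assms(2)]] SA_mulS[OF AAV[OF assms(3)]]
    by (simp only: mult_ac)
  then show ?thesis unfolding avg_cmult qq_def .
qed

lemma cc_gk: assumes "\<sigma> \<in> spins V" "A \<in> AA" "B \<in> AA"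
  shows "cc (gk \<sigma> k) A B = SA \<sigma> A * SA \<sigma> B * cc k A B"
  unfolding cc_def qq_gk[OF assms] mm_gk[OF assms(1,2)] mm_gk[OF assms(1,3)] by (simp add: algebra_simps)

lemma Nf_as_sum: "(\<Sum>\<sigma>\<in>spins V. exp (Hm k \<sigma>) * g \<sigma>) = Nf g k"
  unfolding Nf_def by (simp add: mult.commute)

lemma Nf_avg: "Nf f k = Zf k * avg f k"
  unfolding avg_def using Zf_ne[of k] by simp

lemma nish_m: assumes A: "A \<in> AA"
  shows "(\<Sum>\<sigma>\<in>spins V. exp (Hm k \<sigma>) * mm (gk \<sigma> k) A) = Zf k * (mm k A)\<^sup>2"
proof -
  have "(\<Sum>\<sigma>\<in>spins V. exp (Hm k \<sigma>) * mm (gk \<sigma> k) A) = (\<Sum>\<sigma>\<in>spins V. exp (Hm k \<sigma>) * (mm k A * SA \<sigma> A))"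
    by (intro sum.cong refl) (simp add: mm_gk[OF _ A] mult.commute)
  also have "\<dots> = Nf (\<lambda>\<sigma>. mm k A * SA \<sigma> A) k" by (rule Nf_as_sum)
  also have "\<dots> = mm k A * (Zf k * mm k A)" unfolding Nf_cmult Nf_avg mm_def ..
  finally show ?thesis by (simp add: power2_eq_square mult_ac)
qed

lemma nish_m2: assumes A: "A \<in> AA"
  shows "(\<Sum>\<sigma>\<in>spins V. exp (Hm k \<sigma>) * (mm (gk \<sigma> k) A)\<^sup>2) = Zf k * (mm k A)\<^sup>2"
proof -
  have "(\<Sum>\<sigma>\<in>spins V. exp (Hm k \<sigma>) * (mm (gk \<sigma> k) A)\<^sup>2) = (\<Sum>\<sigma>\<in>spins V. exp (Hm k \<sigma>) * ((mm k A)\<^sup>2 * 1))"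
  proof (intro sum.cong refl)
    fix \<sigma> assume s: "\<sigma> \<in> spins V"
    have "(mm (gk \<sigma> k) A)\<^sup>2 = (SA \<sigma> A * SA \<sigma> A) * (mm k A)\<^sup>2"
      unfolding mm_gk[OF s A] by (simp add: power2_eq_square mult_ac)
    then show "exp (Hm k \<sigma>) * (mm (gk \<sigma> k) A)\<^sup>2 = exp (Hm k \<sigma>) * ((mm k A)\<^sup>2 * 1)"
      using SA_sq[OF s AAV[OF A]] by simp
  qed
  also have "\<dots> = Nf (\<lambda>\<sigma>. (mm k A)\<^sup>2 * 1) k" by (rule Nf_as_sum)
  also have "\<dots> = (mm k A)\<^sup>2 * Zf k" unfolding Nf_cmult Zf_def ..
  finally show ?thesis by (simp add: mult.commute)
qed

lemma nish_c:
  "(\<Sum>\<sigma>\<in>spins V. exp (Hm k \<sigma>) * (\<Sum>A\<in>AA. \<Sum>B\<in>AA. d A * d B * (cc (gk \<sigma> k) A B * (1 - mm (gk \<sigma> k) B))))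
   = Zf k * (\<Sum>A\<in>AA. \<Sum>B\<in>AA. d A * d B * (cc k A B)\<^sup>2)"
proof -
  have pt: "(\<Sum>A\<in>AA. \<Sum>B\<in>AA. d A * d B * (cc (gk \<sigma> k) A B * (1 - mm (gk \<sigma> k) B)))
     = (\<Sum>A\<in>AA. \<Sum>B\<in>AA. (d A * d B * cc k A B) * (SA \<sigma> A * SA \<sigma> B - mm k B * SA \<sigma> A))"
    if s: "\<sigma> \<in> spins V" for \<sigma>
  proof (intro sum.cong refl)
    fix A B assume A: "A \<in> AA" and B: "B \<in> AA"
    have "cc (gk \<sigma> k) A B * (1 - mm (gk \<sigma> k) B)
        = cc k A B * (SA \<sigma> A * SA \<sigma> B - (SA \<sigma> B * SA \<sigma> B) * mm k B * SA \<sigma> A)"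
      unfolding cc_gk[OF s A B] mm_gk[OF s B] by (simp add: algebra_simps)
    then show "d A * d B * (cc (gk \<sigma> k) A B * (1 - mm (gk \<sigma> k) B))
        = d A * d B * cc k A B * (SA \<sigma> A * SA \<sigma> B - mm k B * SA \<sigma> A)"
      using SA_sq[OF s AAV[OF B]] by simp
  qed
  have "(\<Sum>\<sigma>\<in>spins V. exp (Hm k \<sigma>) * (\<Sum>A\<in>AA. \<Sum>B\<in>AA. d A * d B * (cc (gk \<sigma> k) A B * (1 - mm (gk \<sigma> k) B))))
      = (\<Sum>\<sigma>\<in>spins V. exp (Hm k \<sigma>) * (\<Sum>A\<in>AA. \<Sum>B\<in>AA. (d A * d B * cc k A B) * (SA \<sigma> A * SA \<sigma> B - mm k B * SA \<sigma> A)))"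
    by (intro sum.cong refl) (simp only: pt)
  also have "\<dots> = Nf (\<lambda>\<sigma>. \<Sum>A\<in>AA. \<Sum>B\<in>AA. (d A * d B * cc k A B) * (SA \<sigma> A * SA \<sigma> B - mm k B * SA \<sigma> A)) k"
    by (rule Nf_as_sum)
  also have "\<dots> = (\<Sum>A\<in>AA. \<Sum>B\<in>AA. (d A * d B * cc k A B) * (Zf k * qq k A B - mm k B * (Zf k * mm k A)))"
    unfolding Nf_sum Nf_cmult Nf_diff Nf_avg qq_def mm_def ..
  also have "\<dots> = Zf k * (\<Sum>A\<in>AA. \<Sum>B\<in>AA. d A * d B * (cc k A B)\<^sup>2)"
    unfolding sum_distrib_left cc_def by (intro sum.cong refl) (simp add: algebra_simps power2_eq_square)
  finally show ?thesis .
qed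

lemma avg_expand: "avg f k = (\<Sum>S\<in>spins V. (exp (Hm k S) / Zf k) * f S)"
  unfolding avg_def Nf_def sum_divide_distrib by (intro sum.cong refl) simp

lemma cc_repr: "cc k A B = (\<Sum>S\<in>spins V. (exp (Hm k S) / Zf k) * ((SA S A - mm k A) * (SA S B - mm k B)))"
proof -
  have "avg (\<lambda>S. (SA S A - mm k A) * (SA S B - mm k B)) k
      = avg (\<lambda>S. SA S A * SA S B - (mm k B * SA S A + mm k A * SA S B) + mm k A * mm k B * 1) k"
    by (intro avg_cong) (simp add: algebra_simps)
  also have "\<dots> = qq k A B - (mm k B * mm k A + mm k A * mm k B) + mm k A * mm k B"
    unfolding avg_add avg_diff avg_cmult avg_one qq_def mm_def by simp
  also have "\<dots> = cc k A B" unfolding cc_def by simp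
  finally show ?thesis unfolding avg_expand by simp
qed

lemma psd: "0 \<le> (\<Sum>A\<in>AA. \<Sum>B\<in>AA. d A * d B * (cc k A B)\<^sup>2)"
proof -
  define w where "w S = exp (Hm k S) / Zf k" for S
  define x where "x S A = SA S A - mm k A" for S A
  have cr: "cc k A B = (\<Sum>S\<in>spins V. w S * (x S A * x S B))" for A B
    unfolding cc_repr w_def x_def ..
  have "(\<Sum>A\<in>AA. \<Sum>B\<in>AA. d A * d B * (cc k A B)\<^sup>2)
      = (\<Sum>A\<in>AA. \<Sum>B\<in>AA. \<Sum>T\<in>spins V. \<Sum>S\<in>spins V. d A * d B * ((w S * (x S A * x S B)) * (w T * (x T A * x T B))))"
    by (simp only: power2_eq_square cr sum_product sum_distrib_left sum_distrib_right)
  also have "\<dots> = (\<Sum>T\<in>spins V. \<Sum>S\<in>spins V. \<Sum>A\<in>AA. \<Sum>B\<in>AA. d A * d B * ((w S * (x S A * x S B)) * (w T * (x T A * x T B))))"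
    by (simp only: sum.swap[where A=AA and B="spins V"])
  also have "\<dots> = (\<Sum>T\<in>spins V. \<Sum>S\<in>spins V. \<Sum>A\<in>AA. \<Sum>B\<in>AA. (w S * w T) * ((d A * x S A * x T A) * (d B * x S B * x T B)))"
    by (intro sum.cong refl) (simp only: mult_ac)
  also have "\<dots> = (\<Sum>T\<in>spins V. \<Sum>S\<in>spins V. (w S * w T) * (\<Sum>A\<in>AA. d A * x S A * x T A)\<^sup>2)"
    by (simp only: power2_eq_square sum_product) (simp only: sum_distrib_left)
  also have "\<dots> \<ge> 0"
  proof (intro sum_nonneg mult_nonneg_nonneg)
    fix S T show "0 \<le> w S" "0 \<le> w T" unfolding w_def using Zf_pos[of k] by simp_all
  qed simp
  finally show ?thesis .
qed

lemma Nf_meas: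
  assumes k: "\<And>A. A \<in> AA \<Longrightarrow> (\<lambda>x. k x A) \<in> borel_measurable M"
  shows "(\<lambda>x. Nf f (k x)) \<in> borel_measurable M"
  unfolding Nf_def Hm_def
  by (intro borel_measurable_sum borel_measurable_times borel_measurable_const
      measurable_compose[OF _ borel_measurable_exp] k measurable_ident_sets[OF refl])

lemma avg_meas:
  assumes k: "\<And>A. A \<in> AA \<Longrightarrow> (\<lambda>x. k x A) \<in> borel_measurable M"
  shows "(\<lambda>x. avg f (k x)) \<in> borel_measurable M"
  unfolding avg_def Zf_def by (intro borel_measurable_divide Nf_meas k)

lemma mm_meas:
  assumes k: "\<And>A. A \<in> AA \<Longrightarrow> (\<lambda>x. k x A) \<in> borel_measurable M"
  shows "(\<lambda>x. mm (k x) A) \<in> borel_measurable M"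
  unfolding mm_def by (rule avg_meas[OF k])

lemma cc_meas:
  assumes k: "\<And>A. A \<in> AA \<Longrightarrow> (\<lambda>x. k x A) \<in> borel_measurable M"
  shows "(\<lambda>x. cc (k x) A B) \<in> borel_measurable M"
  unfolding cc_def qq_def mm_def by (intro borel_measurable_diff borel_measurable_times avg_meas k)

lemma lnZ_meas:
  assumes k: "\<And>A. A \<in> AA \<Longrightarrow> (\<lambda>x. k x A) \<in> borel_measurable M"
  shows "(\<lambda>x. ln (Zf (k x))) \<in> borel_measurable M"
  unfolding Zf_def by (intro borel_measurable_ln Nf_meas k)

end

context spin begin

abbreviation "MM \<equiv> PiM AA (\<lambda>_. std_gauss)"

definition "kk u J = (\<lambda>A. sqrt (u A) * J A)"
definition "hp u J = (\<lambda>A. sqrt (u A) * J A + u A)"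

lemma MM_prob: "prob_space MM"
  by (intro prob_space_PiM sg_prob)

lemma comp_meas: assumes "A \<in> AA" shows "(\<lambda>J. J A) \<in> borel_measurable MM"
proof -
  have "(\<lambda>J. J A) \<in> measurable MM std_gauss" by (rule measurable_component_singleton[OF assms])
  then show ?thesis by simp
qed

lemma kk_meas: "A \<in> AA \<Longrightarrow> (\<lambda>J. kk u J A) \<in> borel_measurable MM"
  unfolding kk_def by (intro borel_measurable_times borel_measurable_const comp_meas)

lemma hp_meas: "A \<in> AA \<Longrightarrow> (\<lambda>J. hp u J A) \<in> borel_measurable MM"
  unfolding hp_def by (intro borel_measurable_add borel_measurable_times borel_measurable_const comp_meas)

lemma gk_kk_meas: "A \<in> AA \<Longrightarrow> (\<lambda>J. gk \<sigma> (kk u J) A) \<in> borel_measurable MM"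
  unfolding gk_def by (intro borel_measurable_times borel_measurable_const kk_meas)

lemma W_flip:
  assumes u: "\<And>A. A \<in> AA \<Longrightarrow> 0 \<le> u A"
  shows "(\<Prod>A\<in>AA. exp (sqrt (u A) * (\<lambda>A\<in>AA. SA \<sigma> A * J A) A - (sqrt (u A))\<^sup>2 / 2))
       = exp (- (\<Sum>A\<in>AA. u A) / 2) * exp (Hm (kk u J) \<sigma>)"
proof -
  have "(\<Prod>A\<in>AA. exp (sqrt (u A) * (\<lambda>A\<in>AA. SA \<sigma> A * J A) A - (sqrt (u A))\<^sup>2 / 2))
      = (\<Prod>A\<in>AA. exp (kk u J A * SA \<sigma> A - u A / 2))"
    using u by (intro prod.cong refl) (simp add: kk_def mult_ac)
  also have "\<dots> = exp (\<Sum>A\<in>AA. kk u J A * SA \<sigma> A - u A / 2)"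
    by (rule exp_sum[OF finAA, symmetric])
  also have "(\<Sum>A\<in>AA. kk u J A * SA \<sigma> A - u A / 2) = - (\<Sum>A\<in>AA. u A) / 2 + Hm (kk u J) \<sigma>"
    unfolding Hm_def sum_subtractf by (simp add: sum_divide_distrib)
  finally show ?thesis using exp_add[of "- (sum u AA / 2)" "Hm (kk u J) \<sigma>"] by simp
qed

lemma nishimori:
  fixes F :: "('v set \<Rightarrow> real) \<Rightarrow> real"
  assumes u: "\<And>A. A \<in> AA \<Longrightarrow> 0 \<le> u A"
    and loc: "\<And>k k'. (\<And>A. A \<in> AA \<Longrightarrow> k A = k' A) \<Longrightarrow> F k = F k'"
    and Fb: "\<And>k. \<bar>F k\<bar> \<le> C"
    and Fm: "\<And>k. (\<And>A. A \<in> AA \<Longrightarrow> (\<lambda>J. k J A) \<in> borel_measurable MM) \<Longrightarrow> (\<lambda>J. F (k J)) \<in> borel_measurable MM"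
  shows "(\<integral>J. F (hp u J) \<partial>MM) = (\<integral>J. (exp (- (\<Sum>A\<in>AA. u A) / 2) / real (card (spins V))) *
            (\<Sum>\<sigma>\<in>spins V. exp (Hm (kk u J) \<sigma>) * F (gk \<sigma> (kk u J))) \<partial>MM)"
proof -
  define a where "a A = sqrt (u A)" for A
  define W where "W J = (\<Prod>A\<in>AA. exp (a A * J A - (a A)\<^sup>2 / 2))" for J :: "'v set \<Rightarrow> real"
  define G where "G J = F (kk u J)" for J
  define fl where "fl \<sigma> J = (\<lambda>A\<in>AA. SA \<sigma> A * J A)" for \<sigma> :: "'v \<Rightarrow> real" and J :: "'v set \<Rightarrow> real"
  define c where "c = exp (- (\<Sum>A\<in>AA. u A) / 2)"
  have Gm: "G \<in> borel_measurable MM" unfolding G_def by (rule Fm) (rule kk_meas)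
  have Gb: "\<bar>G J\<bar> \<le> C" for J unfolding G_def by (rule Fb)
  have Wm: "W \<in> borel_measurable MM"
    unfolding W_def by (intro borel_measurable_prod borel_measurable_exp[THEN measurable_compose[rotated]]
        borel_measurable_diff borel_measurable_times borel_measurable_const comp_meas) 
  have WG_int: "integrable MM (\<lambda>J. W J * G J)"
    unfolding W_def by (rule CM_integrable[OF finAA Gm, of C]) (use Gb in auto)
  have step1: "(\<integral>J. F (hp u J) \<partial>MM) = (\<integral>J. W J * G J \<partial>MM)"
  proof -
    have "(\<integral>J. F (hp u J) \<partial>MM) = (\<integral>J. G (\<lambda>A\<in>AA. J A + a A) \<partial>MM)"
    proof (rule Bochner_Integration.integral_cong[OF refl])
      fix J assume J: "J \<in> space MM"
      show "F (hp u J) = G (\<lambda>A\<in>AA. J A + a A)"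
        unfolding G_def
      proof (rule loc)
        fix A assume A: "A \<in> AA"
        have "sqrt (u A) * sqrt (u A) = u A" using u[OF A] by simp
        then show "hp u J A = kk u (\<lambda>A\<in>AA. J A + a A) A"
          using A unfolding hp_def kk_def a_def by (simp add: algebra_simps)
      qed
    qed
    also have "\<dots> = (\<integral>J. W J * G J \<partial>MM)"
      unfolding W_def by (rule CM_PiM[OF finAA Gm])
    finally show ?thesis .
  qed
  have step2: "(\<integral>J. W J * G J \<partial>MM) = (\<integral>J. c * (exp (Hm (kk u J) \<sigma>) * F (gk \<sigma> (kk u J))) \<partial>MM)"
    and int2: "integrable MM (\<lambda>J. c * (exp (Hm (kk u J) \<sigma>) * F (gk \<sigma> (kk u J))))"
    if s: "\<sigma> \<in> spins V" for \<sigma>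
  proof -
    have sA: "SA \<sigma> A = 1 \<or> SA \<sigma> A = -1" if "A \<in> AA" for A using SA_pm[OF s AAV[OF that]] .
    have WGm: "(\<lambda>J. W J * G J) \<in> borel_measurable MM" using Wm Gm by measurable
    have eq: "W (fl \<sigma> J) * G (fl \<sigma> J) = c * (exp (Hm (kk u J) \<sigma>) * F (gk \<sigma> (kk u J)))" for J
    proof -
      have "W (fl \<sigma> J) = c * exp (Hm (kk u J) \<sigma>)"
        unfolding W_def fl_def a_def c_def by (rule W_flip[OF u])
      moreover have "G (fl \<sigma> J) = F (gk \<sigma> (kk u J))"
        unfolding G_def by (rule loc) (simp add: kk_def gk_def fl_def mult_ac)
      ultimately show ?thesis by simp
    qed
    have "(\<integral>J. W J * G J \<partial>MM) = (\<integral>J. W (fl \<sigma> J) * G (fl \<sigma> J) \<partial>MM)"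
      unfolding fl_def using flip_PiM(1)[OF finAA sA WGm] by simp
    then show "(\<integral>J. W J * G J \<partial>MM) = (\<integral>J. c * (exp (Hm (kk u J) \<sigma>) * F (gk \<sigma> (kk u J))) \<partial>MM)"
      unfolding eq .
    have "integrable MM (\<lambda>J. W (fl \<sigma> J) * G (fl \<sigma> J))"
      unfolding fl_def using flip_PiM(2)[OF finAA sA WGm] WG_int by simp
    then show "integrable MM (\<lambda>J. c * (exp (Hm (kk u J) \<sigma>) * F (gk \<sigma> (kk u J))))"
      unfolding eq .
  qed
  have N: "real (card (spins V)) > 0" using spins_fin spins_ne by (simp add: card_gt_0_iff)
  have "(\<integral>J. F (hp u J) \<partial>MM) = (\<Sum>\<sigma>\<in>spins V. (\<integral>J. W J * G J \<partial>MM)) / real (card (spins V))"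
    using N step1 by simp
  also have "\<dots> = (\<Sum>\<sigma>\<in>spins V. (\<integral>J. c * (exp (Hm (kk u J) \<sigma>) * F (gk \<sigma> (kk u J))) \<partial>MM)) / real (card (spins V))"
    using step2 by (simp cong: sum.cong)
  also have "(\<Sum>\<sigma>\<in>spins V. (\<integral>J. c * (exp (Hm (kk u J) \<sigma>) * F (gk \<sigma> (kk u J))) \<partial>MM))
      = (\<integral>J. (\<Sum>\<sigma>\<in>spins V. c * (exp (Hm (kk u J) \<sigma>) * F (gk \<sigma> (kk u J)))) \<partial>MM)"
    by (rule Bochner_Integration.integral_sum[symmetric]) (rule int2)
  also have "(\<integral>J. (\<Sum>\<sigma>\<in>spins V. c * (exp (Hm (kk u J) \<sigma>) * F (gk \<sigma> (kk u J)))) \<partial>MM) / real (card (spins V))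
      = (\<integral>J. (\<Sum>\<sigma>\<in>spins V. c * (exp (Hm (kk u J) \<sigma>) * F (gk \<sigma> (kk u J)))) / real (card (spins V)) \<partial>MM)"
    by simp
  also have "\<dots> = (\<integral>J. (c / real (card (spins V))) * (\<Sum>\<sigma>\<in>spins V. exp (Hm (kk u J) \<sigma>) * F (gk \<sigma> (kk u J))) \<partial>MM)"
    by (simp add: sum_distrib_left[symmetric])
  finally show ?thesis unfolding c_def .
qed

lemma Hm_loc: "(\<And>A. A \<in> AA \<Longrightarrow> k A = k' A) \<Longrightarrow> Hm k S = Hm k' S"
  unfolding Hm_def by (intro sum.cong refl) simp

lemma Nf_loc: assumes h: "\<And>A. A \<in> AA \<Longrightarrow> k A = k' A" shows "Nf f k = Nf f k'"
  unfolding Nf_def using Hm_loc[OF h] by simp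

lemma avg_loc: assumes h: "\<And>A. A \<in> AA \<Longrightarrow> k A = k' A" shows "avg f k = avg f k'"
  unfolding avg_def Zf_def using Nf_loc[OF h] by simp

lemma mm_loc: assumes h: "\<And>A. A \<in> AA \<Longrightarrow> k A = k' A" shows "mm k B = mm k' B"
  unfolding mm_def by (rule avg_loc[OF h])

lemma cc_loc: assumes h: "\<And>A. A \<in> AA \<Longrightarrow> k A = k' A" shows "cc k B C = cc k' B C"
  unfolding cc_def qq_def mm_def using avg_loc[OF h] by simp

lemma ni_m:
  assumes u: "\<And>A. A \<in> AA \<Longrightarrow> 0 \<le> u A" and A: "A \<in> AA"
  shows "(\<integral>J. mm (hp u J) A \<partial>MM) = (\<integral>J. (mm (hp u J) A)\<^sup>2 \<partial>MM)"
proof -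
  have "(\<integral>J. mm (hp u J) A \<partial>MM) = (\<integral>J. (exp (- (\<Sum>A\<in>AA. u A) / 2) / real (card (spins V))) *
            (\<Sum>\<sigma>\<in>spins V. exp (Hm (kk u J) \<sigma>) * mm (gk \<sigma> (kk u J)) A) \<partial>MM)"
  proof (rule nishimori[where F="\<lambda>k. mm k A" and C=1 and u=u, OF u])
    show "mm k A = mm k' A" if "\<And>A. A \<in> AA \<Longrightarrow> k A = k' A" for k k' by (rule mm_loc[OF that])
    show "\<bar>mm k A\<bar> \<le> 1" for k by (rule mm_bound[OF A])
    show "(\<lambda>J. mm (k J) A) \<in> borel_measurable MM" if "\<And>A. A \<in> AA \<Longrightarrow> (\<lambda>J. k J A) \<in> borel_measurable MM" for k
      by (rule mm_meas[OF that])
  qed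
  also have "\<dots> = (\<integral>J. (exp (- (\<Sum>A\<in>AA. u A) / 2) / real (card (spins V))) *
            (\<Sum>\<sigma>\<in>spins V. exp (Hm (kk u J) \<sigma>) * (mm (gk \<sigma> (kk u J)) A)\<^sup>2) \<partial>MM)"
    by (simp only: nish_m[OF A] nish_m2[OF A])
  also have "\<dots> = (\<integral>J. (mm (hp u J) A)\<^sup>2 \<partial>MM)"
  proof (rule nishimori[where F="\<lambda>k. (mm k A)\<^sup>2" and C=1 and u=u, OF u, symmetric])
    show "(mm k A)\<^sup>2 = (mm k' A)\<^sup>2" if "\<And>A. A \<in> AA \<Longrightarrow> k A = k' A" for k k' using mm_loc[OF that] by simp
    show "\<bar>(mm k A)\<^sup>2\<bar> \<le> 1" for k using mm_bound[OF A, of k] by (simp add: abs_square_le_1)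
    show "(\<lambda>J. (mm (k J) A)\<^sup>2) \<in> borel_measurable MM" if "\<And>A. A \<in> AA \<Longrightarrow> (\<lambda>J. k J A) \<in> borel_measurable MM" for k
      unfolding power2_eq_square by (intro borel_measurable_times mm_meas[OF that])
  qed
  finally show ?thesis .
qed

lemma ni_c:
  assumes u: "\<And>A. A \<in> AA \<Longrightarrow> 0 \<le> u A"
  shows "0 \<le> (\<integral>J. (\<Sum>A\<in>AA. \<Sum>B\<in>AA. d A * d B * (cc (hp u J) A B * (1 - mm (hp u J) B))) \<partial>MM)"
proof -
  let ?F = "\<lambda>k. \<Sum>A\<in>AA. \<Sum>B\<in>AA. d A * d B * (cc k A B * (1 - mm k B))"
  have Fb: "\<bar>?F k\<bar> \<le> (\<Sum>A\<in>AA. \<Sum>B\<in>AA. \<bar>d A * d B\<bar> * 4)" for k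
  proof -
    have "\<bar>?F k\<bar> \<le> (\<Sum>A\<in>AA. \<bar>\<Sum>B\<in>AA. d A * d B * (cc k A B * (1 - mm k B))\<bar>)" by (rule sum_abs)
    also have "\<dots> \<le> (\<Sum>A\<in>AA. \<Sum>B\<in>AA. \<bar>d A * d B * (cc k A B * (1 - mm k B))\<bar>)"
      by (intro sum_mono sum_abs)
    also have "\<dots> \<le> (\<Sum>A\<in>AA. \<Sum>B\<in>AA. \<bar>d A * d B\<bar> * 4)"
    proof (intro sum_mono)
      fix A B assume A: "A \<in> AA" and B: "B \<in> AA"
      have "\<bar>cc k A B * (1 - mm k B)\<bar> \<le> 2 * 2"
        unfolding abs_mult using cc_bound[OF A B, of k] mm_bound[OF B, of k]
        by (intro mult_mono) auto
      then show "\<bar>d A * d B * (cc k A B * (1 - mm k B))\<bar> \<le> \<bar>d A * d B\<bar> * 4"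
        by (simp add: abs_mult mult_left_mono)
    qed
    finally show ?thesis .
  qed
  have "(\<integral>J. ?F (hp u J) \<partial>MM) = (\<integral>J. (exp (- (\<Sum>A\<in>AA. u A) / 2) / real (card (spins V))) *
            (\<Sum>\<sigma>\<in>spins V. exp (Hm (kk u J) \<sigma>) * ?F (gk \<sigma> (kk u J))) \<partial>MM)"
  proof (rule nishimori[where F="?F" and u=u and C="\<Sum>A\<in>AA. \<Sum>B\<in>AA. \<bar>d A * d B\<bar> * 4"])
    show "0 \<le> u A" if "A \<in> AA" for A using u[OF that] .
    show "\<bar>?F k\<bar> \<le> (\<Sum>A\<in>AA. \<Sum>B\<in>AA. \<bar>d A * d B\<bar> * 4)" for k by (rule Fb)
    show "?F k = ?F k'" if "\<And>A. A \<in> AA \<Longrightarrow> k A = k' A" for k k'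
      using cc_loc[OF that] mm_loc[OF that] by simp
    show "(\<lambda>J. ?F (k J)) \<in> borel_measurable MM" if k: "\<And>A. A \<in> AA \<Longrightarrow> (\<lambda>J. k J A) \<in> borel_measurable MM" for k
      by (intro borel_measurable_sum borel_measurable_times borel_measurable_const borel_measurable_diff
          cc_meas mm_meas k)
  qed
  also have "\<dots> = (\<integral>J. (exp (- (\<Sum>A\<in>AA. u A) / 2) / real (card (spins V))) *
            (Zf (kk u J) * (\<Sum>A\<in>AA. \<Sum>B\<in>AA. d A * d B * (cc (kk u J) A B)\<^sup>2)) \<partial>MM)"
    by (simp only: nish_c)
  also have "\<dots> \<ge> 0"
    by (intro integral_nonneg_AE AE_I2 mult_nonneg_nonneg psd) (auto intro: less_imp_le[OF Zf_pos])
  finally show ?thesis .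
qed

lemma hp_upd_deriv:
  "((\<lambda>r. hp u (J(B := r)) C) has_real_derivative (if C = B then sqrt (u B) else 0)) (at r0)"
proof (cases "C = B")
  case True
  have "((\<lambda>r. sqrt (u B) * r + u B) has_real_derivative sqrt (u B) * 1 + 0) (at r0)"
    by (intro DERIV_add DERIV_cmult DERIV_ident DERIV_const)
  then show ?thesis using True unfolding hp_def by simp
next
  case False
  then show ?thesis unfolding hp_def by simp
qed

lemma ibp_m:
  assumes u: "\<And>A. A \<in> AA \<Longrightarrow> 0 \<le> u A" and A: "A \<in> AA"
  shows "(\<integral>J. J A * mm (hp u J) A \<partial>MM) = (\<integral>J. sqrt (u A) * (1 - (mm (hp u J) A)\<^sup>2) \<partial>MM)"
proof -
  have "(\<integral>J. J A * mm (hp u J) A \<partial>MM) = (\<integral>J. sqrt (u A) * cc (hp u J) A A \<partial>MM)"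
  proof (rule ibp_PiM[OF finAA A, where C=1 and C'="sqrt (u A) * 2"])
    show "(\<lambda>J. mm (hp u J) A) \<in> borel_measurable MM" by (intro mm_meas hp_meas)
    show "(\<lambda>J. sqrt (u A) * cc (hp u J) A A) \<in> borel_measurable MM"
      by (intro borel_measurable_times borel_measurable_const cc_meas hp_meas)
    show "\<bar>mm (hp u J) A\<bar> \<le> 1" for J by (rule mm_bound[OF A])
    show "\<bar>sqrt (u A) * cc (hp u J) A A\<bar> \<le> sqrt (u A) * 2" for J
      using cc_bound[OF A A, of "hp u J"] u[OF A] by (simp add: abs_mult mult_left_mono)
    show "((\<lambda>r. mm (hp u (J(A := r))) A) has_real_derivative sqrt (u A) * cc (hp u (J(A := r))) A A) (at r)" for J r
      using mm_deriv[where p="\<lambda>r. hp u (J(A := r))" and p'="\<lambda>C. if C = A then sqrt (u A) else 0" and tt=r and A=A,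
          OF hp_upd_deriv] sum_delta_mult[OF A, of "sqrt (u A)" "cc (hp u (J(A := r))) A"] by simp
  qed
  then show ?thesis by (simp add: cc_diag[OF A])
qed

lemma ibp_c:
  assumes u: "\<And>A. A \<in> AA \<Longrightarrow> 0 \<le> u A" and A: "A \<in> AA" and B: "B \<in> AA"
  shows "(\<integral>J. J B * cc (hp u J) A B \<partial>MM) = (\<integral>J. sqrt (u B) * (-2 * cc (hp u J) A B * mm (hp u J) B) \<partial>MM)"
proof (rule ibp_PiM[OF finAA B, where C=2 and C'="sqrt (u B) * 4"])
  show "(\<lambda>J. cc (hp u J) A B) \<in> borel_measurable MM" by (intro cc_meas hp_meas)
  show "(\<lambda>J. sqrt (u B) * (-2 * cc (hp u J) A B * mm (hp u J) B)) \<in> borel_measurable MM"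
    by (intro borel_measurable_times borel_measurable_const cc_meas mm_meas hp_meas)
  show "\<bar>cc (hp u J) A B\<bar> \<le> 2" for J by (rule cc_bound[OF A B])
  show "\<bar>sqrt (u B) * (-2 * cc (hp u J) A B * mm (hp u J) B)\<bar> \<le> sqrt (u B) * 4" for J
  proof -
    have "\<bar>-2 * cc (hp u J) A B * mm (hp u J) B\<bar> \<le> 2 * 2 * 1"
      unfolding abs_mult using cc_bound[OF A B, of "hp u J"] mm_bound[OF B, of "hp u J"]
      by (intro mult_mono) auto
    then show ?thesis using u[OF B] by (simp add: abs_mult mult_left_mono)
  qed
  show "((\<lambda>r. cc (hp u (J(B := r))) A B) has_real_derivative sqrt (u B) * (-2 * cc (hp u (J(B := r))) A B * mm (hp u (J(B := r))) B)) (at r)" for J r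
    by (rule cc_deriv_single[OF A B hp_upd_deriv])
qed

end

context spin begin

lemma lnZ_bound: "\<bar>ln (Zf k)\<bar> \<le> \<bar>ln (real (card (spins V)))\<bar> + (\<Sum>A\<in>AA. \<bar>k A\<bar>)"
proof -
  let ?K = "\<Sum>A\<in>AA. \<bar>k A\<bar>"
  let ?N = "real (card (spins V))"
  have N: "?N > 0" using spins_fin spins_ne by (simp add: card_gt_0_iff)
  have H: "\<bar>Hm k S\<bar> \<le> ?K" if S: "S \<in> spins V" for S
  proof -
    have "\<bar>Hm k S\<bar> \<le> (\<Sum>A\<in>AA. \<bar>k A * SA S A\<bar>)" unfolding Hm_def by (rule sum_abs)
    also have "\<dots> = ?K" using SA_abs[OF S AAV] by (intro sum.cong refl) (simp add: abs_mult)
    finally show ?thesis .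
  qed
  have lo: "?N * exp (- ?K) \<le> Zf k"
  proof -
    have "?N * exp (- ?K) = (\<Sum>S\<in>spins V. exp (- ?K))" by simp
    also have "\<dots> \<le> (\<Sum>S\<in>spins V. 1 * exp (Hm k S))"
    proof (intro sum_mono)
      fix S assume "S \<in> spins V"
      then have "- ?K \<le> Hm k S" using H[of S] by linarith
      then show "exp (- ?K) \<le> 1 * exp (Hm k S)" by simp
    qed
    finally show ?thesis unfolding Zf_def Nf_def .
  qed
  have hi: "Zf k \<le> ?N * exp ?K"
  proof -
    have "Zf k = (\<Sum>S\<in>spins V. 1 * exp (Hm k S))" unfolding Zf_def Nf_def ..
    also have "\<dots> \<le> (\<Sum>S\<in>spins V. exp ?K)"
    proof (intro sum_mono)
      fix S assume "S \<in> spins V"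
      then have "Hm k S \<le> ?K" using H[of S] by linarith
      then show "1 * exp (Hm k S) \<le> exp ?K" by simp
    qed
    also have "\<dots> = ?N * exp ?K" by simp
    finally show ?thesis .
  qed
  have "ln (?N * exp (- ?K)) \<le> ln (Zf k)"
    using lo N Zf_pos[of k] by (subst ln_le_cancel_iff) auto
  then have l1: "ln ?N - ?K \<le> ln (Zf k)" using N by (simp add: ln_mult)
  have "ln (Zf k) \<le> ln (?N * exp ?K)"
    using hi N Zf_pos[of k] by (subst ln_le_cancel_iff) auto
  then have l2: "ln (Zf k) \<le> ln ?N + ?K" using N by (simp add: ln_mult)
  show ?thesis using l1 l2 by linarith
qed

lemma hp_abs: "0 \<le> u A \<Longrightarrow> \<bar>hp u J A\<bar> \<le> sqrt (u A) * \<bar>J A\<bar> + u A"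
  unfolding hp_def by (auto simp: abs_mult intro!: order.trans[OF abs_triangle_ineq])

lemma int_lin_sum: "integrable MM (\<lambda>J. c0 + (\<Sum>A\<in>AA. c A * \<bar>J A\<bar> + c' A))"
proof -
  interpret P: prob_space MM by (rule MM_prob)
  show ?thesis
    by (intro Bochner_Integration.integrable_add P.integrable_const Bochner_Integration.integrable_sum
        int_lin_abs[OF finAA])
qed

lemma lnZ_int:
  assumes u: "\<And>A. A \<in> AA \<Longrightarrow> 0 \<le> u A"
  shows "integrable MM (\<lambda>J. ln (Zf (hp u J)))"
proof (rule Bochner_Integration.integrable_bound[OF int_lin_sum[of "\<bar>ln (real (card (spins V)))\<bar>" "\<lambda>A. sqrt (u A)" u]])
  show "(\<lambda>J. ln (Zf (hp u J))) \<in> borel_measurable MM" by (intro lnZ_meas hp_meas)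
  show "AE J in MM. norm (ln (Zf (hp u J))) \<le> norm (\<bar>ln (real (card (spins V)))\<bar> + (\<Sum>A\<in>AA. sqrt (u A) * \<bar>J A\<bar> + u A))"
  proof (rule AE_I2)
    fix J
    have "\<bar>ln (Zf (hp u J))\<bar> \<le> \<bar>ln (real (card (spins V)))\<bar> + (\<Sum>A\<in>AA. \<bar>hp u J A\<bar>)" by (rule lnZ_bound)
    also have "\<dots> \<le> \<bar>ln (real (card (spins V)))\<bar> + (\<Sum>A\<in>AA. sqrt (u A) * \<bar>J A\<bar> + u A)"
      by (intro add_left_mono sum_mono hp_abs u)
    finally show "norm (ln (Zf (hp u J))) \<le> norm (\<bar>ln (real (card (spins V)))\<bar> + (\<Sum>A\<in>AA. sqrt (u A) * \<bar>J A\<bar> + u A))"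
      by simp
  qed
qed

lemma free_energy_eq: "free_energy V AA z = (\<integral>J. ln (Zf (hp z J)) \<partial>MM)"
  unfolding free_energy_def Zf_def Nf_def Hm_def hp_def SA_def by simp

end

locale seg = spin V AA for V :: "'v set" and AA :: "'v set set" +
  fixes x y :: "'v set \<Rightarrow> real"
  assumes x0: "\<And>A. A \<in> AA \<Longrightarrow> 0 \<le> x A" and y0: "\<And>A. A \<in> AA \<Longrightarrow> 0 \<le> y A"
begin

definition "dd A = x A - y A"
definition "ut t A = y A + t * dd A"
definition "hdv t J A = (if dd A = 0 then 0 else dd A * J A / (2 * sqrt (ut t A)) + dd A)"
definition "ff t = (\<integral>J. ln (Zf (hp (ut t) J)) \<partial>MM)"
definition "mq t A = (\<integral>J. mm (hp (ut t) J) A \<partial>MM)"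
definition "gg t = (\<Sum>A\<in>AA. dd A * mq t A)"

lemma ut_alt: "ut t A = (1 - t) * y A + t * x A"
  unfolding ut_def dd_def by (simp add: algebra_simps)

lemma ut_nonneg: "0 \<le> t \<Longrightarrow> t \<le> 1 \<Longrightarrow> A \<in> AA \<Longrightarrow> 0 \<le> ut t A"
  unfolding ut_alt using x0 y0 by (intro add_nonneg_nonneg mult_nonneg_nonneg) auto

lemma ut_pos: assumes t: "0 < t" "t < 1" and A: "A \<in> AA" and d: "dd A \<noteq> 0" shows "0 < ut t A"
proof (rule ccontr)
  assume "\<not> 0 < ut t A"
  moreover have "0 \<le> (1 - t) * y A" "0 \<le> t * x A" using x0[OF A] y0[OF A] t by auto
  ultimately have "(1 - t) * y A = 0" "t * x A = 0" unfolding ut_alt by linarith+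
  then have "y A = 0" "x A = 0" using t by auto
  then show False using d unfolding dd_def by simp
qed

lemma ut_le: assumes "0 \<le> t" "t \<le> 1" "A \<in> AA" shows "ut t A \<le> max (x A) (y A)"
proof -
  have "(1 - t) * y A \<le> (1 - t) * max (x A) (y A)" "t * x A \<le> t * max (x A) (y A)"
    using assms by (auto intro!: mult_left_mono)
  then show ?thesis unfolding ut_alt by (simp add: algebra_simps)
qed

lemma ut_between: assumes "a \<le> r" "r \<le> b" shows "min (ut a A) (ut b A) \<le> ut r A"
proof (cases "0 \<le> dd A")
  case True
  then have "ut a A \<le> ut r A" unfolding ut_def using assms by (auto intro!: mult_right_mono)
  then show ?thesis by simp
next
  case False
  then have "ut b A \<le> ut r A" unfolding ut_def using assms by (auto intro!: mult_right_mono_neg)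
  then show ?thesis by simp
qed

lemma hp_t_deriv:
  assumes t: "0 < t" "t < 1" and A: "A \<in> AA"
  shows "((\<lambda>r. hp (ut r) J A) has_real_derivative hdv t J A) (at t)"
proof (cases "dd A = 0")
  case True
  then have "(\<lambda>r. hp (ut r) J A) = (\<lambda>r. sqrt (y A) * J A + y A)" unfolding hp_def ut_def by simp
  then show ?thesis by (simp add: hdv_def True)
next
  case False
  have pos: "0 < ut t A" by (rule ut_pos[OF t A False])
  have d1: "((\<lambda>r. ut r A) has_real_derivative dd A) (at t)"
    unfolding ut_def using DERIV_add[OF DERIV_const DERIV_cmult_right[OF DERIV_ident, of "dd A"]] by simp
  have d2: "((\<lambda>r. sqrt (ut r A)) has_real_derivative inverse (sqrt (ut t A)) / 2 * dd A) (at t)"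
    by (rule DERIV_chain2[OF DERIV_real_sqrt[OF pos] d1])
  have "((\<lambda>r. sqrt (ut r A) * J A + ut r A) has_real_derivative inverse (sqrt (ut t A)) / 2 * dd A * J A + dd A) (at t)"
    by (intro DERIV_add DERIV_cmult_right d1 d2)
  moreover have "inverse (sqrt (ut t A)) / 2 * dd A * J A + dd A = hdv t J A"
    unfolding hdv_def using False by (simp add: field_simps)
  ultimately show ?thesis unfolding hp_def by simp
qed

end

context seg begin

lemma ut_nonneg_int: "0 < t \<Longrightarrow> t < 1 \<Longrightarrow> A \<in> AA \<Longrightarrow> 0 \<le> ut t A"
  by (rule ut_nonneg) auto

lemma hdv_meas: assumes A: "A \<in> AA" shows "(\<lambda>J. hdv t J A) \<in> borel_measurable MM"
proof (cases "dd A = 0")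
  case True then show ?thesis unfolding hdv_def by simp
next
  case False
  have "(\<lambda>J. dd A * J A / (2 * sqrt (ut t A)) + dd A) \<in> borel_measurable MM"
    by (intro borel_measurable_add borel_measurable_divide borel_measurable_times borel_measurable_const comp_meas[OF A])
  then show ?thesis unfolding hdv_def using False by simp
qed

definition "lo a b A = min (ut a A) (ut b A)"
definition "Bd a b J = (\<Sum>A\<in>AA. \<bar>dd A\<bar> / (2 * sqrt (lo a b A)) * \<bar>J A\<bar> + \<bar>dd A\<bar>)"

lemma hdv_bound:
  assumes ab: "0 < a" "a < r" "r < b" "b < 1" and A: "A \<in> AA"
  shows "\<bar>hdv r J A\<bar> \<le> \<bar>dd A\<bar> / (2 * sqrt (lo a b A)) * \<bar>J A\<bar> + \<bar>dd A\<bar>"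
proof (cases "dd A = 0")
  case True then show ?thesis unfolding hdv_def by simp
next
  case False
  have lpos: "0 < lo a b A" unfolding lo_def using ut_pos[OF _ _ A False, of a] ut_pos[OF _ _ A False, of b] ab by simp
  have le: "lo a b A \<le> ut r A" unfolding lo_def by (rule ut_between) (use ab in auto)
  have s1: "0 < sqrt (lo a b A)" using lpos by simp
  have s2: "sqrt (lo a b A) \<le> sqrt (ut r A)" using le by simp
  have "\<bar>hdv r J A\<bar> \<le> \<bar>dd A * J A / (2 * sqrt (ut r A))\<bar> + \<bar>dd A\<bar>"
    unfolding hdv_def using False abs_triangle_ineq[of "dd A * J A / (2 * sqrt (ut r A))" "dd A"] by simp
  also have "\<bar>dd A * J A / (2 * sqrt (ut r A))\<bar> = \<bar>dd A\<bar> * \<bar>J A\<bar> / (2 * sqrt (ut r A))"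
    using s1 s2 by (simp add: abs_mult)
  also have "\<dots> \<le> \<bar>dd A\<bar> * \<bar>J A\<bar> / (2 * sqrt (lo a b A))"
    using s1 s2 by (intro divide_left_mono) auto
  finally show ?thesis by simp
qed

lemma Bd_int: "integrable MM (Bd a b)"
  using int_lin_sum[of 0 "\<lambda>A. \<bar>dd A\<bar> / (2 * sqrt (lo a b A))" "\<lambda>A. \<bar>dd A\<bar>"] unfolding Bd_def by simp

lemma sum_hdv_bound:
  assumes ab: "0 < a" "a < r" "r < b" "b < 1" and g: "\<And>A. A \<in> AA \<Longrightarrow> \<bar>g A\<bar> \<le> K" and K: "0 \<le> K"
  shows "\<bar>\<Sum>A\<in>AA. hdv r J A * g A\<bar> \<le> K * Bd a b J"
proof -
  have "\<bar>\<Sum>A\<in>AA. hdv r J A * g A\<bar> \<le> (\<Sum>A\<in>AA. \<bar>hdv r J A * g A\<bar>)" by (rule sum_abs)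
  also have "\<dots> \<le> (\<Sum>A\<in>AA. K * (\<bar>dd A\<bar> / (2 * sqrt (lo a b A)) * \<bar>J A\<bar> + \<bar>dd A\<bar>))"
  proof (intro sum_mono)
    fix A assume A: "A \<in> AA"
    have "\<bar>hdv r J A * g A\<bar> = \<bar>g A\<bar> * \<bar>hdv r J A\<bar>" by (simp add: abs_mult)
    also have "\<dots> \<le> K * (\<bar>dd A\<bar> / (2 * sqrt (lo a b A)) * \<bar>J A\<bar> + \<bar>dd A\<bar>)"
      using g[OF A] hdv_bound[OF ab A, of J] K by (intro mult_mono) auto
    finally show "\<bar>hdv r J A * g A\<bar> \<le> K * (\<bar>dd A\<bar> / (2 * sqrt (lo a b A)) * \<bar>J A\<bar> + \<bar>dd A\<bar>)" .
  qed
  also have "\<dots> = K * Bd a b J" unfolding Bd_def by (simp add: sum_distrib_left)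
  finally show ?thesis .
qed

lemma per_A:
  assumes t: "0 < t" "t < 1" and A: "A \<in> AA"
  shows "integrable MM (\<lambda>J. hdv t J A * mm (hp (ut t) J) A)"
    and "(\<integral>J. hdv t J A * mm (hp (ut t) J) A \<partial>MM) = dd A / 2 + dd A / 2 * mq t A"
proof -
  interpret P: prob_space MM by (rule MM_prob)
  have u: "\<And>A. A \<in> AA \<Longrightarrow> 0 \<le> ut t A" using ut_nonneg_int[OF t] .
  let ?m = "\<lambda>J. mm (hp (ut t) J) A"
  have mm_m: "?m \<in> borel_measurable MM" by (intro mm_meas hp_meas)
  have i_m: "integrable MM ?m"
    by (rule P.integrable_const_bound[where B=1]) (use mm_bound[OF A] mm_m in auto)
  have i_m2: "integrable MM (\<lambda>J. (?m J)\<^sup>2)"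
    by (rule P.integrable_const_bound[where B=1]) (use mm_bound[OF A] mm_m in \<open>auto simp: abs_square_le_1\<close>)
  have i_Jm: "integrable MM (\<lambda>J. J A * ?m J)"
  proof (rule Bochner_Integration.integrable_bound[OF int_lin_abs[OF finAA A, of 1 0]])
    show "(\<lambda>J. J A * ?m J) \<in> borel_measurable MM" using comp_meas[OF A] mm_m by (rule borel_measurable_times)
    show "AE J in MM. norm (J A * ?m J) \<le> norm (1 * \<bar>J A\<bar> + 0)"
      using mm_bound[OF A] by (intro AE_I2) (simp add: abs_mult mult_left_le)
  qed
  have "integrable MM (\<lambda>J. hdv t J A * ?m J) \<and> (\<integral>J. hdv t J A * ?m J \<partial>MM) = dd A / 2 + dd A / 2 * mq t A"
  proof (cases "dd A = 0")
    case True then show ?thesis unfolding hdv_def by simp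
  next
    case False
    let ?v = "ut t A"
    have v: "0 < ?v" by (rule ut_pos[OF t A False])
    let ?c = "dd A / (2 * sqrt ?v)"
    have eq: "hdv t J A * ?m J = ?c * (J A * ?m J) + dd A * ?m J" for J
      unfolding hdv_def using False v by (simp add: field_simps)
    have int: "integrable MM (\<lambda>J. hdv t J A * ?m J)"
      unfolding eq using i_Jm i_m by simp
    have "(\<integral>J. hdv t J A * ?m J \<partial>MM) = ?c * (\<integral>J. J A * ?m J \<partial>MM) + dd A * (\<integral>J. ?m J \<partial>MM)"
      unfolding eq using i_Jm i_m by simp
    also have "(\<integral>J. J A * ?m J \<partial>MM) = (\<integral>J. sqrt ?v * (1 - (?m J)\<^sup>2) \<partial>MM)"
      by (rule ibp_m[OF u A])
    also have "\<dots> = sqrt ?v * (1 - (\<integral>J. (?m J)\<^sup>2 \<partial>MM))"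
      using i_m2 P.prob_space by (simp add: Bochner_Integration.integral_diff)
    also have "(\<integral>J. (?m J)\<^sup>2 \<partial>MM) = mq t A"
      unfolding mq_def by (rule ni_m[OF u A, symmetric])
    also have "(\<integral>J. ?m J \<partial>MM) = mq t A" unfolding mq_def ..
    finally have "(\<integral>J. hdv t J A * ?m J \<partial>MM) = ?c * (sqrt ?v * (1 - mq t A)) + dd A * mq t A" .
    also have "\<dots> = dd A / 2 + dd A / 2 * mq t A"
      using v by (simp add: field_simps)
    finally show ?thesis using int by simp
  qed
  then show "integrable MM (\<lambda>J. hdv t J A * mm (hp (ut t) J) A)"
    and "(\<integral>J. hdv t J A * mm (hp (ut t) J) A \<partial>MM) = dd A / 2 + dd A / 2 * mq t A" by auto
qed

lemma ff_deriv:
  assumes t: "0 < t" "t < 1"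
  shows "(ff has_real_derivative (\<Sum>A\<in>AA. dd A) / 2 + gg t / 2) (at t)"
proof -
  define a where "a = t / 2"
  define b where "b = (1 + t) / 2"
  have ab: "0 < a" "a < t" "t < b" "b < 1" using t unfolding a_def b_def by auto
  have D: "((\<lambda>s. \<integral>J. ln (Zf (hp (ut s) J)) \<partial>MM) has_real_derivative
      (\<integral>J. (\<Sum>A\<in>AA. hdv t J A * mm (hp (ut t) J) A) \<partial>MM)) (at t)"
  proof (rule deriv_integral[where a=a and b=b and B="Bd a b" and F="\<lambda>s J. ln (Zf (hp (ut s) J))"
        and F'="\<lambda>s J. \<Sum>A\<in>AA. hdv s J A * mm (hp (ut s) J) A" and t=t])
    show "a < t" "t < b" using ab by auto
    show "integrable MM (\<lambda>J. ln (Zf (hp (ut s) J)))" if "a < s" "s < b" for s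
      by (rule lnZ_int) (rule ut_nonneg, use that ab in auto)
    show "(\<lambda>J. \<Sum>A\<in>AA. hdv t J A * mm (hp (ut t) J) A) \<in> borel_measurable MM"
      by (intro borel_measurable_sum borel_measurable_times hdv_meas mm_meas hp_meas)
    show "((\<lambda>r. ln (Zf (hp (ut r) J))) has_real_derivative (\<Sum>A\<in>AA. hdv s J A * mm (hp (ut s) J) A)) (at s)"
      if "J \<in> space MM" "a < s" "s < b" for J s
    proof (rule lnZ_deriv[where p="\<lambda>r. hp (ut r) J" and p'="hdv s J" and tt=s])
      fix A assume "A \<in> AA"
      then show "((\<lambda>r. hp (ut r) J A) has_real_derivative hdv s J A) (at s)"
        by (rule hp_t_deriv[rotated 2]) (use that ab in auto)
    qed
    show "integrable MM (Bd a b)" by (rule Bd_int)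
    show "\<bar>\<Sum>A\<in>AA. hdv s J A * mm (hp (ut s) J) A\<bar> \<le> Bd a b J" if "J \<in> space MM" "a < s" "s < b" for J s
      using sum_hdv_bound[of a s b "\<lambda>A. mm (hp (ut s) J) A" 1 J] mm_bound that ab by simp
  qed
  have E: "(\<integral>J. (\<Sum>A\<in>AA. hdv t J A * mm (hp (ut t) J) A) \<partial>MM) = (\<Sum>A\<in>AA. dd A) / 2 + gg t / 2"
  proof -
    have "(\<integral>J. (\<Sum>A\<in>AA. hdv t J A * mm (hp (ut t) J) A) \<partial>MM) = (\<Sum>A\<in>AA. (\<integral>J. hdv t J A * mm (hp (ut t) J) A \<partial>MM))"
      by (rule Bochner_Integration.integral_sum) (rule per_A(1)[OF t])
    also have "\<dots> = (\<Sum>A\<in>AA. dd A / 2 + dd A / 2 * mq t A)"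
      by (intro sum.cong refl per_A(2)[OF t])
    also have "\<dots> = (\<Sum>A\<in>AA. dd A) / 2 + gg t / 2"
      unfolding gg_def sum.distrib sum_divide_distrib by (simp add: mult_ac)
    finally show ?thesis .
  qed
  show ?thesis using D unfolding E ff_def[abs_def] .
qed

lemma per_AB:
  assumes t: "0 < t" "t < 1" and A: "A \<in> AA" and B: "B \<in> AA"
  shows "integrable MM (\<lambda>J. hdv t J B * cc (hp (ut t) J) A B)"
    and "(\<integral>J. hdv t J B * cc (hp (ut t) J) A B \<partial>MM)
         = dd B * (\<integral>J. cc (hp (ut t) J) A B * (1 - mm (hp (ut t) J) B) \<partial>MM)"
proof -
  interpret P: prob_space MM by (rule MM_prob)
  have u: "\<And>A. A \<in> AA \<Longrightarrow> 0 \<le> ut t A" using ut_nonneg_int[OF t] .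
  let ?c = "\<lambda>J. cc (hp (ut t) J) A B"
  let ?m = "\<lambda>J. mm (hp (ut t) J) B"
  have c_m: "?c \<in> borel_measurable MM" by (intro cc_meas hp_meas)
  have m_m: "?m \<in> borel_measurable MM" by (intro mm_meas hp_meas)
  have i_c: "integrable MM ?c"
    by (rule P.integrable_const_bound[where B=2]) (use cc_bound[OF A B] c_m in auto)
  have i_cm: "integrable MM (\<lambda>J. ?c J * ?m J)"
  proof (rule P.integrable_const_bound[where B=2])
    show "AE J in MM. norm (?c J * ?m J) \<le> 2"
    proof (rule AE_I2)
      fix J
      have "\<bar>?c J\<bar> * \<bar>?m J\<bar> \<le> 2 * 1" using cc_bound[OF A B] mm_bound[OF B] by (intro mult_mono) auto
      then show "norm (?c J * ?m J) \<le> 2" by (simp add: abs_mult)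
    qed
    show "(\<lambda>J. ?c J * ?m J) \<in> borel_measurable MM" using c_m m_m by (rule borel_measurable_times)
  qed
  have i_Jc: "integrable MM (\<lambda>J. J B * ?c J)"
  proof (rule Bochner_Integration.integrable_bound[OF int_lin_abs[OF finAA B, of 2 0]])
    show "(\<lambda>J. J B * ?c J) \<in> borel_measurable MM" using comp_meas[OF B] c_m by (rule borel_measurable_times)
    show "AE J in MM. norm (J B * ?c J) \<le> norm (2 * \<bar>J B\<bar> + 0)"
    proof (rule AE_I2)
      fix J
      have "\<bar>J B\<bar> * \<bar>?c J\<bar> \<le> \<bar>J B\<bar> * 2" using cc_bound[OF A B] by (intro mult_left_mono) auto
      then show "norm (J B * ?c J) \<le> norm (2 * \<bar>J B\<bar> + 0)" by (simp add: abs_mult mult.commute)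
    qed
  qed
  have "integrable MM (\<lambda>J. hdv t J B * ?c J) \<and>
        (\<integral>J. hdv t J B * ?c J \<partial>MM) = dd B * (\<integral>J. ?c J * (1 - ?m J) \<partial>MM)"
  proof (cases "dd B = 0")
    case True then show ?thesis unfolding hdv_def by simp
  next
    case False
    let ?v = "ut t B"
    have v: "0 < ?v" by (rule ut_pos[OF t B False])
    let ?k = "dd B / (2 * sqrt ?v)"
    have eq: "hdv t J B * ?c J = ?k * (J B * ?c J) + dd B * ?c J" for J
      unfolding hdv_def using False v by (simp add: field_simps)
    have int: "integrable MM (\<lambda>J. hdv t J B * ?c J)"
      unfolding eq using i_Jc i_c by simp
    have "(\<integral>J. hdv t J B * ?c J \<partial>MM) = ?k * (\<integral>J. J B * ?c J \<partial>MM) + dd B * (\<integral>J. ?c J \<partial>MM)"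
      unfolding eq using i_Jc i_c by simp
    also have "(\<integral>J. J B * ?c J \<partial>MM) = (\<integral>J. sqrt ?v * (-2 * ?c J * ?m J) \<partial>MM)"
      by (rule ibp_c[OF u A B])
    also have "\<dots> = (\<integral>J. (sqrt ?v * (-2)) * (?c J * ?m J) \<partial>MM)"
      by (simp add: mult_ac)
    also have "\<dots> = (sqrt ?v * (-2)) * (\<integral>J. ?c J * ?m J \<partial>MM)"
      by (rule integral_mult_right_zero)
    finally have "(\<integral>J. hdv t J B * ?c J \<partial>MM) = ?k * ((sqrt ?v * (-2)) * (\<integral>J. ?c J * ?m J \<partial>MM)) + dd B * (\<integral>J. ?c J \<partial>MM)" .
    also have "\<dots> = dd B * ((\<integral>J. ?c J \<partial>MM) - (\<integral>J. ?c J * ?m J \<partial>MM))"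
      using v by (simp add: field_simps)
    also have "(\<integral>J. ?c J \<partial>MM) - (\<integral>J. ?c J * ?m J \<partial>MM) = (\<integral>J. ?c J * (1 - ?m J) \<partial>MM)"
      using i_c i_cm by (simp add: right_diff_distrib)
    finally show ?thesis using int by simp
  qed
  then show "integrable MM (\<lambda>J. hdv t J B * cc (hp (ut t) J) A B)"
    and "(\<integral>J. hdv t J B * cc (hp (ut t) J) A B \<partial>MM)
         = dd B * (\<integral>J. cc (hp (ut t) J) A B * (1 - mm (hp (ut t) J) B) \<partial>MM)" by auto
qed

end

context seg begin

lemma mq_deriv:
  assumes t: "0 < t" "t < 1" and A: "A \<in> AA"
  shows "((\<lambda>s. mq s A) has_real_derivative
     (\<Sum>B\<in>AA. dd B * (\<integral>J. cc (hp (ut t) J) A B * (1 - mm (hp (ut t) J) B) \<partial>MM))) (at t)"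
proof -
  interpret P: prob_space MM by (rule MM_prob)
  define a where "a = t / 2"
  define b where "b = (1 + t) / 2"
  have ab: "0 < a" "a < t" "t < b" "b < 1" using t unfolding a_def b_def by auto
  have D: "((\<lambda>s. \<integral>J. mm (hp (ut s) J) A \<partial>MM) has_real_derivative
      (\<integral>J. (\<Sum>B\<in>AA. hdv t J B * cc (hp (ut t) J) A B) \<partial>MM)) (at t)"
  proof (rule deriv_integral[where a=a and b=b and B="\<lambda>J. 2 * Bd a b J" and F="\<lambda>s J. mm (hp (ut s) J) A"
        and F'="\<lambda>s J. \<Sum>B\<in>AA. hdv s J B * cc (hp (ut s) J) A B" and t=t])
    show "a < t" "t < b" using ab by auto
    show "integrable MM (\<lambda>J. mm (hp (ut s) J) A)" for s
    proof (rule P.integrable_const_bound[where B=1])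
      show "AE J in MM. norm (mm (hp (ut s) J) A) \<le> 1" using mm_bound[OF A] by (intro AE_I2) simp
      show "(\<lambda>J. mm (hp (ut s) J) A) \<in> borel_measurable MM" by (intro mm_meas hp_meas)
    qed
    show "(\<lambda>J. \<Sum>B\<in>AA. hdv t J B * cc (hp (ut t) J) A B) \<in> borel_measurable MM"
      by (intro borel_measurable_sum borel_measurable_times hdv_meas cc_meas hp_meas)
    show "((\<lambda>r. mm (hp (ut r) J) A) has_real_derivative (\<Sum>B\<in>AA. hdv s J B * cc (hp (ut s) J) A B)) (at s)"
      if "J \<in> space MM" "a < s" "s < b" for J s
    proof (rule mm_deriv[where p="\<lambda>r. hp (ut r) J" and p'="hdv s J" and tt=s])
      fix B assume "B \<in> AA"
      then show "((\<lambda>r. hp (ut r) J B) has_real_derivative hdv s J B) (at s)"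
        by (rule hp_t_deriv[rotated 2]) (use that ab in auto)
    qed
    show "integrable MM (\<lambda>J. 2 * Bd a b J)" using Bd_int by simp
    show "\<bar>\<Sum>B\<in>AA. hdv s J B * cc (hp (ut s) J) A B\<bar> \<le> 2 * Bd a b J" if "J \<in> space MM" "a < s" "s < b" for J s
      using sum_hdv_bound[of a s b "\<lambda>B. cc (hp (ut s) J) A B" 2 J] cc_bound[OF A] that ab by simp
  qed
  have E: "(\<integral>J. (\<Sum>B\<in>AA. hdv t J B * cc (hp (ut t) J) A B) \<partial>MM)
      = (\<Sum>B\<in>AA. dd B * (\<integral>J. cc (hp (ut t) J) A B * (1 - mm (hp (ut t) J) B) \<partial>MM))"
  proof -
    have "(\<integral>J. (\<Sum>B\<in>AA. hdv t J B * cc (hp (ut t) J) A B) \<partial>MM)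
        = (\<Sum>B\<in>AA. (\<integral>J. hdv t J B * cc (hp (ut t) J) A B \<partial>MM))"
      by (rule Bochner_Integration.integral_sum) (rule per_AB(1)[OF t A])
    also have "\<dots> = (\<Sum>B\<in>AA. dd B * (\<integral>J. cc (hp (ut t) J) A B * (1 - mm (hp (ut t) J) B) \<partial>MM))"
      by (intro sum.cong refl per_AB(2)[OF t A])
    finally show ?thesis .
  qed
  show ?thesis using D unfolding E mq_def[abs_def] .
qed

lemma gg_deriv:
  assumes t: "0 < t" "t < 1"
  shows "\<exists>D. (gg has_real_derivative D) (at t) \<and> 0 \<le> D"
proof -
  interpret P: prob_space MM by (rule MM_prob)
  let ?X = "\<lambda>A B J. cc (hp (ut t) J) A B * (1 - mm (hp (ut t) J) B)"
  let ?D = "\<Sum>A\<in>AA. dd A * (\<Sum>B\<in>AA. dd B * (\<integral>J. ?X A B J \<partial>MM))"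
  have "((\<lambda>s. \<Sum>A\<in>AA. dd A * mq s A) has_real_derivative ?D) (at t)"
    by (intro DERIV_sum DERIV_cmult mq_deriv[OF t])
  then have D: "(gg has_real_derivative ?D) (at t)" unfolding gg_def[abs_def] .
  have iX: "integrable MM (?X A B)" if A: "A \<in> AA" and B: "B \<in> AA" for A B
  proof (rule P.integrable_const_bound[where B=4])
    show "AE J in MM. norm (?X A B J) \<le> 4"
    proof (rule AE_I2)
      fix J
      have "\<bar>cc (hp (ut t) J) A B\<bar> * \<bar>1 - mm (hp (ut t) J) B\<bar> \<le> 2 * 2"
        using cc_bound[OF A B] mm_bound[OF B] by (intro mult_mono) (auto simp: abs_le_iff)
      then show "norm (?X A B J) \<le> 4" by (simp add: abs_mult)
    qed
    show "?X A B \<in> borel_measurable MM"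
      by (intro borel_measurable_times borel_measurable_diff borel_measurable_const cc_meas mm_meas hp_meas)
  qed
  have "(\<integral>J. (\<Sum>A\<in>AA. \<Sum>B\<in>AA. dd A * dd B * ?X A B J) \<partial>MM)
      = (\<Sum>A\<in>AA. (\<integral>J. (\<Sum>B\<in>AA. dd A * dd B * ?X A B J) \<partial>MM))"
    by (rule Bochner_Integration.integral_sum) (intro Bochner_Integration.integrable_sum integrable_mult_right iX)
  also have "\<dots> = (\<Sum>A\<in>AA. \<Sum>B\<in>AA. (\<integral>J. dd A * dd B * ?X A B J \<partial>MM))"
    by (intro sum.cong refl Bochner_Integration.integral_sum integrable_mult_right iX)
  also have "\<dots> = ?D"
    unfolding integral_mult_right_zero sum_distrib_left by (simp add: mult_ac)
  finally have "?D = (\<integral>J. (\<Sum>A\<in>AA. \<Sum>B\<in>AA. dd A * dd B * ?X A B J) \<partial>MM)" by simp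
  moreover have "0 \<le> (\<integral>J. (\<Sum>A\<in>AA. \<Sum>B\<in>AA. dd A * dd B * ?X A B J) \<partial>MM)"
    by (rule ni_c) (rule ut_nonneg_int[OF t])
  ultimately show ?thesis using D by auto
qed

lemma gg_mono: assumes "0 < s" "s \<le> r" "r < 1" shows "gg s \<le> gg r"
proof (rule DERIV_nonneg_imp_nondecreasing[OF assms(2)])
  fix z assume "s \<le> z" "z \<le> r"
  then show "\<exists>D. (gg has_real_derivative D) (at z) \<and> 0 \<le> D" using assms by (intro gg_deriv) auto
qed

lemma ff_cont: "continuous_on {0..1} ff"
  unfolding ff_def[abs_def]
proof (rule cont_integral[where B="\<lambda>J. \<bar>ln (real (card (spins V)))\<bar> + (\<Sum>A\<in>AA. sqrt (max (x A) (y A)) * \<bar>J A\<bar> + max (x A) (y A))"])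
  show "(\<lambda>J. ln (Zf (hp (ut s) J))) \<in> borel_measurable MM" for s by (intro lnZ_meas hp_meas)
  show "continuous_on {0..1} (\<lambda>r. ln (Zf (hp (ut r) J)))" for J
  proof (rule continuous_on_ln)
    show "continuous_on {0..1} (\<lambda>r. Zf (hp (ut r) J))"
      unfolding Zf_def Nf_def Hm_def hp_def ut_def by (intro continuous_intros)
    show "\<forall>r\<in>{0..1}. Zf (hp (ut r) J) \<noteq> 0" using Zf_ne by auto
  qed
  show "integrable MM (\<lambda>J. \<bar>ln (real (card (spins V)))\<bar> + (\<Sum>A\<in>AA. sqrt (max (x A) (y A)) * \<bar>J A\<bar> + max (x A) (y A)))"
    by (rule int_lin_sum)
  show "\<bar>ln (Zf (hp (ut s) J))\<bar> \<le> \<bar>ln (real (card (spins V)))\<bar> + (\<Sum>A\<in>AA. sqrt (max (x A) (y A)) * \<bar>J A\<bar> + max (x A) (y A))"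
    if "J \<in> space MM" "s \<in> {0..1}" for J s
  proof -
    have "\<bar>ln (Zf (hp (ut s) J))\<bar> \<le> \<bar>ln (real (card (spins V)))\<bar> + (\<Sum>A\<in>AA. \<bar>hp (ut s) J A\<bar>)" by (rule lnZ_bound)
    also have "\<dots> \<le> \<bar>ln (real (card (spins V)))\<bar> + (\<Sum>A\<in>AA. sqrt (max (x A) (y A)) * \<bar>J A\<bar> + max (x A) (y A))"
    proof (intro add_left_mono sum_mono)
      fix A assume A: "A \<in> AA"
      have u0: "0 \<le> ut s A" using that A by (intro ut_nonneg) auto
      have u1: "ut s A \<le> max (x A) (y A)" using that A by (intro ut_le) auto
      have "\<bar>hp (ut s) J A\<bar> \<le> sqrt (ut s A) * \<bar>J A\<bar> + ut s A" by (rule hp_abs[where u="ut s" and A=A, OF u0])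
      also have "\<dots> \<le> sqrt (max (x A) (y A)) * \<bar>J A\<bar> + max (x A) (y A)"
        using u1 by (intro add_mono mult_right_mono) auto
      finally show "\<bar>hp (ut s) J A\<bar> \<le> sqrt (max (x A) (y A)) * \<bar>J A\<bar> + max (x A) (y A)" .
    qed
    finally show ?thesis .
  qed
qed

lemma ff_convex: assumes t: "0 \<le> t" "t \<le> 1" shows "ff t \<le> t * ff 1 + (1 - t) * ff 0"
proof (cases "t = 0 \<or> t = 1")
  case True then show ?thesis by auto
next
  case False
  then have t': "0 < t" "t < 1" using t by auto
  let ?fd = "\<lambda>z. (\<Sum>A\<in>AA. dd A) / 2 + gg z / 2"
  have diff: "ff differentiable (at z)" if "0 < z" "z < 1" for z
    using ff_deriv[OF that] unfolding real_differentiable_def by blast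
  obtain l1 z1 where z1: "0 < z1" "z1 < t" and d1: "DERIV ff z1 :> l1" and e1: "ff t - ff 0 = (t - 0) * l1"
    using MVT[OF t'(1) continuous_on_subset[OF ff_cont] diff] t' by auto
  obtain l2 z2 where z2: "t < z2" "z2 < 1" and d2: "DERIV ff z2 :> l2" and e2: "ff 1 - ff t = (1 - t) * l2"
    using MVT[OF t'(2) continuous_on_subset[OF ff_cont] diff] t' by auto
  have l1: "l1 = ?fd z1" using DERIV_unique[OF d1 ff_deriv] z1 t' by auto
  have l2: "l2 = ?fd z2" using DERIV_unique[OF d2 ff_deriv] z2 t' by auto
  have "gg z1 \<le> gg z2" using z1 z2 by (intro gg_mono) auto
  then have le: "l1 \<le> l2" unfolding l1 l2 by simp
  have "0 \<le> t * (1 - t) * (l2 - l1)" using le t' by (intro mult_nonneg_nonneg) auto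
  moreover have "t * ff 1 + (1 - t) * ff 0 - ff t = t * (1 - t) * (l2 - l1)"
  proof -
    have a: "ff 1 = ff t + (1 - t) * l2" using e2 by simp
    have b: "ff 0 = ff t - t * l1" using e1 by simp
    show ?thesis unfolding a b by (simp add: algebra_simps)
  qed
  ultimately show ?thesis by simp
qed

end

theorem theorem1:
  fixes V :: "'v set" and \<A> :: "'v set set"
  assumes "finite V"
    and "finite \<A>"
    and "\<And>A. A \<in> \<A> \<Longrightarrow> A \<noteq> {} \<and> A \<subseteq> V"
  shows "\<forall>x\<in>nonneg_dom \<A>. \<forall>y\<in>nonneg_dom \<A>. \<forall>t::real. 0 \<le> t \<and> t \<le> 1 \<longrightarrow>
           free_energy V \<A> (\<lambda>A. t * x A + (1 - t) * y A)
             \<le> t * free_energy V \<A> x + (1 - t) * free_energy V \<A> y"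
proof (intro ballI allI impI)
  fix x y and t :: real
  assume x: "x \<in> nonneg_dom \<A>" and y: "y \<in> nonneg_dom \<A>" and t: "0 \<le> t \<and> t \<le> 1"
  have sg: "seg V \<A> x y"
  proof unfold_locales
    show "finite V" by fact
    show "finite \<A>" by fact
    show "A \<subseteq> V" if "A \<in> \<A>" for A using assms(3)[OF that] by blast
    show "0 \<le> x A" if "A \<in> \<A>" for A using x that unfolding nonneg_dom_def by blast
    show "0 \<le> y A" if "A \<in> \<A>" for A using y that unfolding nonneg_dom_def by blast
  qed
  interpret S: seg V \<A> x y by (rule sg)
  have e0: "(\<lambda>A. t * x A + (1 - t) * y A) = S.ut t"
    by (rule ext) (simp add: S.ut_def S.dd_def algebra_simps)
  have e1: "S.ut 1 = x" by (rule ext) (simp add: S.ut_def S.dd_def)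
  have e2: "S.ut 0 = y" by (rule ext) (simp add: S.ut_def S.dd_def)
  have f0: "free_energy V \<A> (\<lambda>A. t * x A + (1 - t) * y A) = S.ff t"
    unfolding e0 S.free_energy_eq S.ff_def ..
  have f1: "free_energy V \<A> x = S.ff 1"
    unfolding S.free_energy_eq S.ff_def e1 ..
  have f2: "free_energy V \<A> y = S.ff 0"
    unfolding S.free_energy_eq S.ff_def e2 ..
  show "free_energy V \<A> (\<lambda>A. t * x A + (1 - t) * y A)
             \<le> t * free_energy V \<A> x + (1 - t) * free_energy V \<A> y"
    unfolding f0 f1 f2 using S.ff_convex t by simp
qed

end
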